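(* Let $\rho,\sigma$ be $d\times d$ density matrices with $\sigma$ of full rank (invertible). Then \[ \min_{U\in\mathcal{U}(d)} S(U\rho U^\dagger\,\|\,\sigma) = H\big(\lambda^\downarrow(\rho)\,\|\,\lambda^\downarrow(\sigma)\big),\qquad \max_{U\in\mathcal{U}(d)} S(U\rho U^\dagger\,\|\,\sigma) = H\big(\lambda^\downarrow(\rho)\,\|\,\lambda^\uparrow(\sigma)\big), \] and moreover the set $\{S(U\rho U^\dagger\|\sigma): U\in\mathcal{U}(d)\}$ equals the closed interval $\big[H(\lambda^\downarrow(\rho)\|\lambda^\downarrow(\sigma)),\ H(\lambda^\downarrow(\rho)\|\lambda^\uparrow(\sigma))\big]$.
   Context: A density matrix is a positive semidefinite complex matrix of trace one; $\mathcal{U}(d)$ is the group of $d\times d$ unitary matrices. The quantum relative entropy is $S(\rho\|\sigma)=\operatorname{Tr}[\rho(\log\rho-\log\sigma)]$ (defined when $\operatorname{supp}\rho\subseteq\operatorname{supp}\sigma$, with the convention $0\log 0=0$). For probability vectors $p,q$, the classical relative entropy is $H(p\|q)=\sum_j p_j(\log p_j-\log q_j)$ if $\operatorname{supp}(p)\subseteq\operatorname{supp}(q)$ (with $0\log 0=0$), and $+\infty$ otherwise. For a Hermitian matrix $A$, $\lambda^\downarrow(A)$ is the vector of its eigenvalues (with multiplicity) in decreasing order and $\lambda^\uparrow(A)$ the same in increasing order. *)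

theory Defs
  imports "Jordan_Normal_Form.Schur_Decomposition" "HOL-Library.Extended_Real"
begin

definition mtrace :: "complex mat \<Rightarrow> complex" where
  "mtrace A = (\<Sum>i<dim_row A. A $$ (i,i))"

definition hermitian_mat :: "complex mat \<Rightarrow> bool" where
  "hermitian_mat A \<longleftrightarrow> mat_adjoint A = A"

definition unitary_mat :: "nat \<Rightarrow> complex mat \<Rightarrow> bool" where
  "unitary_mat d U \<longleftrightarrow> U \<in> carrier_mat d d \<and> U * mat_adjoint U = 1\<^sub>m d \<and> mat_adjoint U * U = 1\<^sub>m d"

definition psd_mat :: "nat \<Rightarrow> complex mat \<Rightarrow> bool" where
  "psd_mat d A \<longleftrightarrow> A \<in> carrier_mat d d \<and> hermitian_mat A \<and>
     (\<forall>v \<in> carrier_vec d. 0 \<le> Re (conjugate v \<bullet> (A *\<^sub>v v)))"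

definition density_mat :: "nat \<Rightarrow> complex mat \<Rightarrow> bool" where
  "density_mat d A \<longleftrightarrow> psd_mat d A \<and> mtrace A = 1"

definition diag_of :: "real list \<Rightarrow> complex mat" where
  "diag_of xs = mat (length xs) (length xs) (\<lambda>(i,j). if i = j then complex_of_real (xs ! i) else 0)"

definition eig_desc :: "nat \<Rightarrow> complex mat \<Rightarrow> real list" where
  "eig_desc d A = (THE xs. length xs = d \<and> sorted_wrt (\<ge>) xs \<and>
      char_poly A = prod_list (map (\<lambda>x. [:- complex_of_real x, 1:]) xs))"

definition eig_asc :: "nat \<Rightarrow> complex mat \<Rightarrow> real list" where
  "eig_asc d A = rev (eig_desc d A)"

definition mat_fun :: "nat \<Rightarrow> (real \<Rightarrow> real) \<Rightarrow> complex mat \<Rightarrow> complex mat" where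
  "mat_fun d f A = (SOME B. \<exists>U xs. unitary_mat d U \<and> length xs = d \<and>
      A = U * diag_of xs * mat_adjoint U \<and> B = U * diag_of (map f xs) * mat_adjoint U)"

text \<open>Quantum relative entropy S(rho||sigma) = Tr[rho (log rho - log sigma)]
  (natural logarithm; used for full-rank sigma, where it is always defined; the
  convention 0 log 0 = 0 is automatic since rho log rho has eigenvalues x ln x
  and 0 * ln 0 = 0).\<close>
definition qrel_entropy :: "nat \<Rightarrow> complex mat \<Rightarrow> complex mat \<Rightarrow> real" where
  "qrel_entropy d \<rho> \<sigma> = Re (mtrace (\<rho> * (mat_fun d ln \<rho> - mat_fun d ln \<sigma>)))"

definition crel_entropy :: "real list \<Rightarrow> real list \<Rightarrow> ereal" where
  "crel_entropy p q = (if \<forall>j < length p. q ! j = 0 \<longrightarrow> p ! j = 0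
     then ereal (\<Sum>j < length p. if p ! j = 0 then 0 else p ! j * (ln (p ! j) - ln (q ! j)))
     else \<infinity>)"

end

theory Submission
  imports Defs "Jordan_Normal_Form.Spectral_Radius" "HOL-Combinatorics.List_Permutation"
begin

lemma adj_dim[simp]: "dim_row (mat_adjoint A) = dim_col A" "dim_col (mat_adjoint A) = dim_row A"
  by (simp_all add: mat_adjoint_def)

lemma adj_index[simp]: assumes "i < dim_col A" "j < dim_row A" shows "mat_adjoint A $$ (i,j) = cnj (A $$ (j,i))"
proof -
  have "mat_adjoint A $$ (i,j) = map conjugate (cols A) ! i $ j"
    unfolding mat_adjoint_def mat_of_rows_def using assms by (subst index_mat, auto)
  also have "\<dots> = conjugate (col A i) $ j" using assms by (simp only: nth_map cols_length cols_nth)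
  also have "\<dots> = cnj (A $$ (j,i))" using assms by (subst vec_index_conjugate, auto)
  finally show ?thesis .
qed

lemma adj_carrier[simp]: "A \<in> carrier_mat d d \<Longrightarrow> mat_adjoint A \<in> carrier_mat d d"
  by (metis adj_dim carrier_matD carrier_matI)

lemma mult_index: "i < dim_row A \<Longrightarrow> j < dim_col B \<Longrightarrow> dim_col A = dim_row B \<Longrightarrow>
   (A * B) $$ (i,j) = (\<Sum>l<dim_col A. A $$ (i,l) * B $$ (l,j))"
  by (auto simp: scalar_prod_def atLeast0LessThan intro!: sum.cong)

lemma diag_of_carrier[simp]: "diag_of xs \<in> carrier_mat (length xs) (length xs)"
  by (simp add: diag_of_def)
lemma diag_of_dim[simp]: "dim_row (diag_of xs) = length xs" "dim_col (diag_of xs) = length xs"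
  by (simp_all add: diag_of_def)
lemma diag_of_index[simp]: "i < length xs \<Longrightarrow> j < length xs \<Longrightarrow> diag_of xs $$ (i,j) = (if i = j then complex_of_real (xs ! i) else 0)"
  by (simp add: diag_of_def)

lemma udu_index: assumes U: "U \<in> carrier_mat d d" and l: "length xs = d" and k: "k < d" and m: "m < d"
  shows "(U * diag_of xs * mat_adjoint U) $$ (k,m) = (\<Sum>i<d. U$$(k,i) * complex_of_real (xs!i) * cnj (U$$(m,i)))"
proof -
  have dims: "dim_row U = d" "dim_col U = d" using U by auto
  have 1: "(U * diag_of xs) $$ (k,i) = U$$(k,i) * complex_of_real (xs!i)" if "i<d" for i
    using dims l k that by (simp del: index_mult_mat add: mult_index if_distrib cong: if_cong)
  have "(U * diag_of xs * mat_adjoint U) $$ (k,m) = (\<Sum>i<d. (U * diag_of xs) $$ (k,i) * mat_adjoint U $$ (i,m))"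
    using dims l k m by (subst mult_index, auto)
  also have "\<dots> = (\<Sum>i<d. U$$(k,i) * complex_of_real (xs!i) * cnj (U$$(m,i)))"
    by (rule sum.cong, simp, subst 1, simp, subst adj_index, use dims m in auto)
  finally show ?thesis .
qed

lemma triple_index: assumes U: "U \<in> carrier_mat d d" and A: "A \<in> carrier_mat d d" and i: "i < d" and j: "j < d"
  shows "(mat_adjoint U * A * U) $$ (i,j) = (\<Sum>k<d. \<Sum>l<d. cnj (U$$(k,i)) * A$$(k,l) * U$$(l,j))"
proof -
  have dims: "dim_row U = d" "dim_col U = d" "dim_row A = d" "dim_col A = d" using U A by auto
  have 1: "(mat_adjoint U * A) $$ (i,l) = (\<Sum>k<d. cnj (U$$(k,i)) * A$$(k,l))" if "l<d" for l
    using dims i that by (subst mult_index, auto intro!: sum.cong)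
  have "(mat_adjoint U * A * U) $$ (i,j) = (\<Sum>l<d. (mat_adjoint U * A) $$ (i,l) * U$$(l,j))"
    using dims i j by (subst mult_index, auto)
  also have "\<dots> = (\<Sum>l<d. (\<Sum>k<d. cnj (U$$(k,i)) * A$$(k,l)) * U$$(l,j))"
    using 1 by simp
  also have "\<dots> = (\<Sum>l<d. \<Sum>k<d. cnj (U$$(k,i)) * A$$(k,l) * U$$(l,j))"
    by (simp add: sum_distrib_right)
  also have "\<dots> = (\<Sum>k<d. \<Sum>l<d. cnj (U$$(k,i)) * A$$(k,l) * U$$(l,j))"
    by (rule sum.swap)
  finally show ?thesis .
qed

lemma unitary_rows: assumes "unitary_mat d U" "j < d" "l < d"
  shows "(\<Sum>i<d. U$$(j,i) * cnj (U$$(l,i))) = (if j = l then 1 else 0)"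
proof -
  have U: "U \<in> carrier_mat d d" and e: "U * mat_adjoint U = 1\<^sub>m d" using assms unfolding unitary_mat_def by auto
  have dims: "dim_row U = d" "dim_col U = d" using U by auto
  have "(U * mat_adjoint U) $$ (j,l) = (\<Sum>i<d. U$$(j,i) * cnj (U$$(l,i)))"
    using dims assms by (subst mult_index, auto intro!: sum.cong)
  thus ?thesis using e assms by simp
qed

lemma unitary_cols: assumes "unitary_mat d U" "j < d" "l < d"
  shows "(\<Sum>i<d. cnj (U$$(i,j)) * U$$(i,l)) = (if j = l then 1 else 0)"
proof -
  have U: "U \<in> carrier_mat d d" and e: "mat_adjoint U * U = 1\<^sub>m d" using assms unfolding unitary_mat_def by auto
  have dims: "dim_row U = d" "dim_col U = d" using U by auto
  have "(mat_adjoint U * U) $$ (j,l) = (\<Sum>i<d. cnj (U$$(i,j)) * U$$(i,l))"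
    using dims assms by (subst mult_index, auto intro!: sum.cong)
  thus ?thesis using e assms by simp
qed

lemma unitaryI: assumes U: "U \<in> carrier_mat d d"
  and r: "\<And>j l. j < d \<Longrightarrow> l < d \<Longrightarrow> (\<Sum>i<d. U$$(j,i) * cnj (U$$(l,i))) = (if j = l then 1 else 0)"
  shows "unitary_mat d U"
proof -
  have dims: "dim_row U = d" "dim_col U = d" using U by auto
  have e: "U * mat_adjoint U = 1\<^sub>m d"
  proof (rule eq_matI)
    fix j l assume "j < dim_row (1\<^sub>m d)" "l < dim_col (1\<^sub>m d)"
    hence jl: "j < d" "l < d" by auto
    have "(U * mat_adjoint U) $$ (j,l) = (\<Sum>i<d. U$$(j,i) * cnj (U$$(l,i)))"
      using dims jl by (subst mult_index, auto intro!: sum.cong)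
    thus "(U * mat_adjoint U) $$ (j,l) = 1\<^sub>m d $$ (j,l)" using r[OF jl] jl by simp
  qed (use dims in auto)
  have "mat_adjoint U * U = 1\<^sub>m d" by (rule mat_mult_left_right_inverse[OF U _ e], insert U, simp)
  thus ?thesis using U e unfolding unitary_mat_def by auto
qed

lemma adjoint_mult: fixes A B :: "complex mat" assumes "A \<in> carrier_mat n m" "B \<in> carrier_mat m k"
  shows "mat_adjoint (A * B) = mat_adjoint B * mat_adjoint A"
proof -
  have dims: "dim_row A = n" "dim_col A = m" "dim_row B = m" "dim_col B = k" using assms by auto
  show ?thesis
  proof (rule eq_matI)
    fix i j assume "i < dim_row (mat_adjoint B * mat_adjoint A)" "j < dim_col (mat_adjoint B * mat_adjoint A)"
    hence ij: "i < k" "j < n" using dims by auto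
    have "mat_adjoint (A * B) $$ (i,j) = cnj ((A*B) $$ (j,i))" using ij dims by (subst adj_index, auto)
    also have "\<dots> = cnj (\<Sum>l<m. A$$(j,l) * B$$(l,i))" using ij dims by (subst mult_index, auto)
    also have "\<dots> = (\<Sum>l<m. mat_adjoint B $$ (i,l) * mat_adjoint A $$ (l,j))"
      using ij dims by (auto simp: mult.commute intro!: sum.cong)
    also have "\<dots> = (mat_adjoint B * mat_adjoint A) $$ (i,j)" using ij dims by (subst mult_index, auto)
    finally show "mat_adjoint (A * B) $$ (i,j) = (mat_adjoint B * mat_adjoint A) $$ (i,j)" .
  qed (use dims in auto)
qed

lemma adjoint_adjoint: "mat_adjoint (mat_adjoint (A::complex mat)) = A"
proof (rule eq_matI)
  fix i j assume ij: "i < dim_row A" "j < dim_col A"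
  have "mat_adjoint (mat_adjoint A) $$ (i,j) = cnj (mat_adjoint A $$ (j,i))" using ij by (subst adj_index, auto)
  also have "\<dots> = A $$ (i,j)" using ij by (subst adj_index, auto)
  finally show "mat_adjoint (mat_adjoint A) $$ (i,j) = A $$ (i,j)" .
qed auto

lemma unitary_mult: assumes A: "unitary_mat d A" and B: "unitary_mat d B" shows "unitary_mat d (A * B)"
proof -
  have Ac: "A \<in> carrier_mat d d" and Bc: "B \<in> carrier_mat d d" using A B unfolding unitary_mat_def by auto
  have aA: "mat_adjoint A \<in> carrier_mat d d" and aB: "mat_adjoint B \<in> carrier_mat d d" using Ac Bc by auto
  have "A * B * mat_adjoint (A * B) = A * B * (mat_adjoint B * mat_adjoint A)"
    by (simp add: adjoint_mult[OF Ac Bc])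
  also have "\<dots> = A * (B * (mat_adjoint B * mat_adjoint A))"
    using Ac Bc aA aB by (metis assoc_mult_mat mult_carrier_mat)
  also have "B * (mat_adjoint B * mat_adjoint A) = (B * mat_adjoint B) * mat_adjoint A"
    using Bc aA aB by (simp add: assoc_mult_mat[of B d d "mat_adjoint B" d])
  also have "\<dots> = mat_adjoint A" using B aA unfolding unitary_mat_def by (metis left_mult_one_mat)
  also have "A * mat_adjoint A = 1\<^sub>m d" using A unfolding unitary_mat_def by simp
  finally have e: "A * B * mat_adjoint (A * B) = 1\<^sub>m d" .
  have "mat_adjoint (A * B) * (A * B) = 1\<^sub>m d"
    by (rule mat_mult_left_right_inverse[OF _ _ e], insert Ac Bc, auto)
  thus ?thesis using e Ac Bc unfolding unitary_mat_def by auto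
qed

lemma unitary_adjoint: assumes A: "unitary_mat d A" shows "unitary_mat d (mat_adjoint A)"
  using A unfolding unitary_mat_def by (auto simp: adjoint_adjoint)

lemma unitary_one: "unitary_mat d (1\<^sub>m d)"
proof -
  have "mat_adjoint (1\<^sub>m d) = (1\<^sub>m d :: complex mat)" by (rule eq_matI, auto)
  thus ?thesis unfolding unitary_mat_def by simp
qed

lemma sum_delta_l: "j < (N::nat) \<Longrightarrow> (\<Sum>i<N. (if j = i then 1 else 0) * f i) = (f j :: complex)"
proof -
  assume j: "j < N"
  have "(\<Sum>i<N. (if j = i then 1 else 0) * f i) = (\<Sum>i<N. if i = j then f i else 0)"
    by (rule sum.cong, auto)
  also have "\<dots> = f j" using j by simp
  finally show ?thesis .
qed

lemma householder_aux:
  fixes u :: "nat \<Rightarrow> complex" and r :: real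
  assumes N: "N > 0" and norm: "(\<Sum>k<N. u k * cnj (u k)) = 1" and u0: "u 0 = complex_of_real r" and r1: "r \<noteq> 1"
  shows "\<exists>W. unitary_mat N W \<and> (\<forall>k<N. W $$ (k,0) = u k)"
proof -
  define w where "w k = (if k = 0 then 1 else 0) - u k" for k
  define s where "s = 2 * (1 - r)"
  have s0: "s \<noteq> 0" using r1 unfolding s_def by auto
  have w0: "w 0 = complex_of_real (1 - r)" unfolding w_def u0 by simp
  have sumw: "(\<Sum>k<N. w k * cnj (w k)) = complex_of_real s"
  proof -
    have "(\<Sum>k<N. w k * cnj (w k)) = (\<Sum>k<N. (if k = 0 then 1 - u k - cnj (u k) else 0) + u k * cnj (u k))"
      by (rule sum.cong, auto simp: w_def algebra_simps)
    also have "\<dots> = 1 - u 0 - cnj (u 0) + 1"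
      using N norm by (simp add: sum.distrib)
    also have "\<dots> = complex_of_real s" unfolding u0 s_def by (simp add: complex_eq_iff)
    finally show ?thesis .
  qed
  define a where "a = complex_of_real (2 / s)"
  define W where "W = mat N N (\<lambda>(i,j). (if i = j then 1 else 0) - a * w i * cnj (w j))"
  have Wc: "W \<in> carrier_mat N N" unfolding W_def by simp
  have Wi: "W $$ (i,j) = (if i = j then 1 else 0) - a * w i * cnj (w j)" if "i < N" "j < N" for i j
    using that unfolding W_def by simp
  have cnja: "cnj a = a" unfolding a_def by simp
  have aa: "a * a * complex_of_real s = 2 * a"
  proof -
    have "2/s*(2/s)*s = 2*(2/s)" using s0 by (simp add: field_simps)
    hence "complex_of_real (2/s*(2/s)*s) = complex_of_real (2*(2/s))" by simp
    thus ?thesis unfolding a_def by (simp only: of_real_mult of_real_numeral)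
  qed
  have "unitary_mat N W"
  proof (rule unitaryI[OF Wc])
    fix j l assume jl: "j < N" "l < N"
    have "(\<Sum>i<N. W$$(j,i) * cnj (W$$(l,i))) =
       (\<Sum>i<N. ((if j = i then 1 else 0) - a * w j * cnj (w i)) * ((if l = i then 1 else 0) - a * cnj (w l) * w i))"
      using jl by (intro sum.cong, auto simp: Wi cnja)
    also have "\<dots> = (\<Sum>i<N. (if j = i then 1 else 0) * (if l = i then 1 else 0)
          - (if j = i then 1 else 0) * (a * cnj (w l) * w i)
          - (if l = i then 1 else 0) * (a * w j * cnj (w i))
          + a * a * w j * cnj (w l) * (w i * cnj (w i)))"
      by (rule sum.cong, simp, simp add: algebra_simps)
    also have "\<dots> = (\<Sum>i<N. (if j = i then 1 else 0) * (if l = i then 1 else 0))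
          - (\<Sum>i<N. (if j = i then 1 else 0) * (a * cnj (w l) * w i))
          - (\<Sum>i<N. (if l = i then 1 else 0) * (a * w j * cnj (w i)))
          + a * a * w j * cnj (w l) * (\<Sum>i<N. w i * cnj (w i))"
      by (simp add: sum.distrib sum_subtractf sum_distrib_left)
    also have "\<dots> = (if j = l then 1 else 0) - a * cnj (w l) * w j - a * w j * cnj (w l)
          + a * a * w j * cnj (w l) * complex_of_real s"
      using jl by (simp add: sum_delta_l sumw)
    also have "\<dots> = (if j = l then 1 else 0)"
      using aa by (simp add: algebra_simps)
      (metis (no_types, lifting) mult.assoc mult.commute)
    finally show "(\<Sum>i<N. W$$(j,i) * cnj (W$$(l,i))) = (if j = l then 1 else 0)" .
  qed
  moreover have "W $$ (k,0) = u k" if "k < N" for k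
  proof -
    have "W $$ (k,0) = (if k = 0 then 1 else 0) - a * w k * complex_of_real (1 - r)"
      using that N by (simp add: Wi w0)
    also have "a * complex_of_real (1 - r) = 1"
    proof -
      have "2 / s * (1 - r) = 1" using r1 unfolding s_def by (simp add: field_simps)
      hence "complex_of_real (2 / s * (1 - r)) = 1" by simp
      thus ?thesis unfolding a_def by (simp only: of_real_mult)
    qed
    hence "a * w k * complex_of_real (1 - r) = w k" by (metis mult.commute mult.left_commute mult_1_right)
    finally show ?thesis by (simp add: w_def)
  qed
  ultimately show ?thesis by blast
qed

lemma cnorm: "z * cnj z = complex_of_real ((cmod z)^2)"
  by (metis complex_norm_square of_real_power)

lemma householder:
  fixes u :: "nat \<Rightarrow> complex"
  assumes N: "N > 0" and norm: "(\<Sum>k<N. u k * cnj (u k)) = 1"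
  shows "\<exists>W c. unitary_mat N W \<and> c \<noteq> 0 \<and> (\<forall>k<N. W $$ (k,0) = c * u k)"
proof -
  define \<phi> where "\<phi> = (if u 0 = 0 then 1 else cnj (u 0) / complex_of_real (cmod (u 0)))"
  define v where "v k = \<phi> * u k" for k
  have e: "u 0 * cnj (u 0) = complex_of_real (cmod (u 0)) * complex_of_real (cmod (u 0))"
    using cnorm[of "u 0"] by (simp add: power2_eq_square)
  have phi: "\<phi> * cnj \<phi> = 1" unfolding \<phi>_def
    using e by (auto simp: field_simps mult.commute[of "cnj (u 0)"])
  hence phi0: "\<phi> \<noteq> 0" by auto
  have v0: "v 0 = complex_of_real (cmod (u 0))"
  proof -
    have e: "u 0 * cnj (u 0) = complex_of_real (cmod (u 0)) * complex_of_real (cmod (u 0))"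
      using cnorm[of "u 0"] by (simp add: power2_eq_square)
    show ?thesis unfolding v_def \<phi>_def
      using e by (auto simp: field_simps mult.commute[of "cnj (u 0)"])
  qed
  have vnorm: "(\<Sum>k<N. v k * cnj (v k)) = 1"
  proof -
    have "(\<Sum>k<N. v k * cnj (v k)) = (\<Sum>k<N. (\<phi> * cnj \<phi>) * (u k * cnj (u k)))"
      unfolding v_def by (rule sum.cong, auto simp: algebra_simps)
    thus ?thesis using phi norm by simp
  qed
  show ?thesis
  proof (cases "cmod (u 0) = 1")
    case False
    from householder_aux[OF N vnorm v0 False] obtain W where "unitary_mat N W" "\<forall>k<N. W $$ (k,0) = v k" by blast
    thus ?thesis using phi0 unfolding v_def by blast
  next
    case True
    have real: "(\<Sum>k<N. (cmod (v k))^2) = 1"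
    proof -
      have "complex_of_real (\<Sum>k<N. (cmod (v k))^2) = 1" using vnorm by (simp add: cnorm)
      thus ?thesis by (simp only: of_real_eq_1_iff)
    qed
    have "(\<Sum>k<N. (cmod (v k))^2) = (cmod (v 0))^2 + (\<Sum>k\<in>{..<N}-{0}. (cmod (v k))^2)"
      using N by (subst sum.remove[of _ 0], auto)
    hence rest: "(\<Sum>k\<in>{..<N}-{0}. (cmod (v k))^2) = 0" using real True v0 by simp
    have vk: "v k = 0" if "k < N" "k \<noteq> 0" for k
    proof -
      have "\<forall>k\<in>{..<N}-{0}. (cmod (v k))^2 = 0" using rest by (subst (asm) sum_nonneg_eq_0_iff, auto)
      thus ?thesis using that by auto
    qed
    have "unitary_mat N (1\<^sub>m N)" by (rule unitary_one)
    moreover have "\<forall>k<N. (1\<^sub>m N) $$ (k,0) = \<phi> * u k"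
      using vk v0 True N unfolding v_def by auto
    ultimately show ?thesis using phi0 by blast
  qed
qed

lemma herm_index: assumes "hermitian_mat A" "A \<in> carrier_mat n n" "i<n" "j<n" shows "A$$(i,j) = cnj (A$$(j,i))"
proof -
  have "A$$(i,j) = mat_adjoint A $$ (i,j)" using assms(1) unfolding hermitian_mat_def by simp
  also have "\<dots> = cnj (A$$(j,i))" using assms by (subst adj_index, auto)
  finally show ?thesis .
qed

lemma hermI: assumes A: "A \<in> carrier_mat n n" and h: "\<And>i j. i<n \<Longrightarrow> j<n \<Longrightarrow> A$$(i,j) = cnj (A$$(j,i))"
  shows "hermitian_mat A"
  unfolding hermitian_mat_def
proof (rule eq_matI)
  fix i j assume "i < dim_row A" "j < dim_col A"
  hence ij: "i < n" "j < n" using A by auto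
  have "mat_adjoint A $$ (i,j) = cnj (A$$(j,i))" using ij A by (subst adj_index, auto)
  also have "\<dots> = A$$(i,j)" using h[OF ij] by simp
  finally show "mat_adjoint A $$ (i,j) = A$$(i,j)" .
qed (use A in auto)

lemma eigen_unit: assumes A: "A \<in> carrier_mat N N" and N: "N > 0"
  shows "\<exists>lam u. (\<Sum>k<N. u k * cnj (u k)) = 1 \<and> (\<forall>k<N. (\<Sum>l<N. A$$(k,l) * u l) = lam * u k)"
proof -
  obtain lam where "lam \<in> spectrum A" using spectrum_non_empty[OF A N] by blast
  then obtain v where ev: "eigenvector A v lam" unfolding spectrum_def eigenvalue_def by auto
  have v: "v \<in> carrier_vec N" and v0: "v \<noteq> 0\<^sub>v N" and Av: "A *\<^sub>v v = lam \<cdot>\<^sub>v v"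
    using ev A unfolding eigenvector_def by auto
  have comp: "(\<Sum>l<N. A$$(k,l) * v $ l) = lam * v $ k" if k: "k < N" for k
  proof -
    have "(A *\<^sub>v v) $ k = (\<Sum>l<N. A$$(k,l) * v $ l)"
      using A v k by (auto simp: scalar_prod_def atLeast0LessThan intro!: sum.cong)
    thus ?thesis using Av v k by simp
  qed
  obtain k0 where k0: "k0 < N" "v $ k0 \<noteq> 0"
    using v v0 by (metis carrier_vecD index_zero_vec(1) eq_vecI index_zero_vec(2))
  define ns where "ns = (\<Sum>k<N. (cmod (v $ k))^2)"
  have "(cmod (v $ k0))^2 \<le> ns" unfolding ns_def using k0
    by (intro member_le_sum, auto)
  moreover have "(cmod (v $ k0))^2 > 0" using k0 by simp
  ultimately have ns: "ns > 0" by linarith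
  define u where "u k = v $ k / complex_of_real (sqrt ns)" for k
  have "(\<Sum>k<N. u k * cnj (u k)) = (\<Sum>k<N. complex_of_real ((cmod (v $ k))^2 / ns))"
  proof (rule sum.cong)
    fix k
    have sq: "complex_of_real (sqrt ns) * complex_of_real (sqrt ns) = complex_of_real ns"
      using ns by (simp only: of_real_mult[symmetric] real_sqrt_mult_self, simp)
    have "u k * cnj (u k) = (v $ k * cnj (v $ k)) / (complex_of_real (sqrt ns) * complex_of_real (sqrt ns))"
      unfolding u_def by simp
    also have "\<dots> = complex_of_real ((cmod (v $ k))^2 / ns)" unfolding sq cnorm by simp
    finally show "u k * cnj (u k) = complex_of_real ((cmod (v $ k))^2 / ns)" .
  qed simp
  also have "\<dots> = complex_of_real ((\<Sum>k<N. (cmod (v $ k))^2) / ns)"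
    by (simp only: sum_divide_distrib of_real_sum)
  also have "\<dots> = complex_of_real (ns / ns)" unfolding ns_def by simp
  also have "\<dots> = 1" using ns by simp
  finally have un: "(\<Sum>k<N. u k * cnj (u k)) = 1" .
  have "(\<Sum>l<N. A$$(k,l) * u l) = lam * u k" if k: "k < N" for k
  proof -
    have "(\<Sum>l<N. A$$(k,l) * u l) = (\<Sum>l<N. A$$(k,l) * v $ l) / complex_of_real (sqrt ns)"
      unfolding u_def by (simp add: sum_divide_distrib)
    thus ?thesis using comp[OF k] unfolding u_def by simp
  qed
  thus ?thesis using un by blast
qed


lemma sum_Suc2: "(\<Sum>k<Suc m. \<Sum>l<Suc m. f k l) = f 0 0 + (\<Sum>l<m. f 0 (Suc l)) + (\<Sum>k<m. f (Suc k) 0)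
   + (\<Sum>k<m. \<Sum>l<m. f (Suc k) (Suc l))"
proof -
  have inner: "\<And>k. (\<Sum>l<Suc m. f k l) = f k 0 + (\<Sum>l<m. f k (Suc l))" by (rule sum.lessThan_Suc_shift)
  have "(\<Sum>k<Suc m. \<Sum>l<Suc m. f k l) = (\<Sum>l<Suc m. f 0 l) + (\<Sum>k<m. \<Sum>l<Suc m. f (Suc k) l)"
    by (rule sum.lessThan_Suc_shift)
  also have "\<dots> = f 0 0 + (\<Sum>l<m. f 0 (Suc l)) + (\<Sum>k<m. f (Suc k) 0 + (\<Sum>l<m. f (Suc k) (Suc l)))"
    by (simp only: inner)
  also have "\<dots> = f 0 0 + (\<Sum>l<m. f 0 (Suc l)) + (\<Sum>k<m. f (Suc k) 0) + (\<Sum>k<m. \<Sum>l<m. f (Suc k) (Suc l))"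
    by (simp only: sum.distrib add.assoc)
  finally show ?thesis .
qed

lemma spectral_diag: "A \<in> carrier_mat n n \<Longrightarrow> hermitian_mat A \<Longrightarrow>
  \<exists>U. unitary_mat n U \<and> (\<forall>i<n. \<forall>j<n. i \<noteq> j \<longrightarrow> (mat_adjoint U * A * U) $$ (i,j) = 0)"
proof (induction n arbitrary: A)
  case 0
  then show ?case using unitary_one by blast
next
  case (Suc m)
  define N where "N = Suc m"
  have A: "A \<in> carrier_mat N N" and hA: "hermitian_mat A" using Suc N_def by auto
  obtain lam u where un: "(\<Sum>k<N. u k * cnj (u k)) = 1" and eu: "\<And>k. k<N \<Longrightarrow> (\<Sum>l<N. A$$(k,l) * u l) = lam * u k"
    using eigen_unit[OF A] N_def by auto
  obtain W c where uW: "unitary_mat N W" and c: "c \<noteq> 0" and W0: "\<And>k. k<N \<Longrightarrow> W $$ (k,0) = c * u k"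
    using householder[OF _ un] N_def by auto
  have Wc: "W \<in> carrier_mat N N" using uW unfolding unitary_mat_def by auto
  have col0: "(\<Sum>l<N. A$$(k,l) * W$$(l,0)) = lam * W$$(k,0)" if k: "k < N" for k
  proof -
    have "(\<Sum>l<N. A$$(k,l) * W$$(l,0)) = (\<Sum>l<N. c * (A$$(k,l) * u l))"
      by (rule sum.cong, simp, simp add: W0 mult.left_commute)
    also have "\<dots> = c * (\<Sum>l<N. A$$(k,l) * u l)" by (simp only: sum_distrib_left)
    also have "\<dots> = c * (lam * u k)" by (simp only: eu[OF k])
    also have "\<dots> = lam * W$$(k,0)" by (simp only: W0[OF k] mult.left_commute)
    finally show ?thesis .
  qed
  define B where "B = mat_adjoint W * A * W"
  have Bc: "B \<in> carrier_mat N N" unfolding B_def using Wc A by auto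
  have hB: "hermitian_mat B"
  proof -
    have aW: "mat_adjoint W \<in> carrier_mat N N" using Wc by auto
    have "mat_adjoint B = mat_adjoint W * mat_adjoint (mat_adjoint W * A)"
      unfolding B_def by (rule adjoint_mult, use Wc A aW in auto)
    also have "mat_adjoint (mat_adjoint W * A) = mat_adjoint A * W"
      by (subst adjoint_mult[OF aW A], simp add: adjoint_adjoint)
    also have "mat_adjoint A = A" using hA unfolding hermitian_mat_def by simp
    also have "mat_adjoint W * (A * W) = B" unfolding B_def
      using aW A Wc by (simp add: assoc_mult_mat[OF aW A Wc])
    finally show ?thesis unfolding hermitian_mat_def .
  qed
  have B0: "B $$ (i,0) = (if i = 0 then lam else 0)" if i: "i < N" for i
  proof -
    have "B $$ (i,0) = (\<Sum>k<N. \<Sum>l<N. cnj (W$$(k,i)) * A$$(k,l) * W$$(l,0))"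
      unfolding B_def using Wc A i N_def by (subst triple_index, auto)
    also have "\<dots> = (\<Sum>k<N. cnj (W$$(k,i)) * (\<Sum>l<N. A$$(k,l) * W$$(l,0)))"
      by (simp add: sum_distrib_left mult.assoc)
    also have "\<dots> = (\<Sum>k<N. lam * (cnj (W$$(k,i)) * W$$(k,0)))"
      by (rule sum.cong, simp, subst col0, auto)
    also have "\<dots> = lam * (\<Sum>k<N. cnj (W$$(k,i)) * W$$(k,0))"
      by (simp only: sum_distrib_left)
    also have "\<dots> = lam * (if i = 0 then 1 else 0)"
    proof -
      have N0: "0 < N" by (simp add: N_def)
      from unitary_cols[OF uW i N0] show ?thesis by (simp only:)
    qed
    finally show ?thesis by simp
  qed
  have B0': "B $$ (0,j) = (if j = 0 then lam else 0)" if j: "j < N" for j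
  proof -
    have N0: "0 < N" by (simp add: N_def)
    have "B $$ (0,j) = cnj (B $$ (j,0))" by (rule herm_index[OF hB Bc N0 j])
    also have "\<dots> = cnj (if j = 0 then lam else 0)" by (simp only: B0[OF j])
    finally have e: "B $$ (0,j) = cnj (if j = 0 then lam else 0)" .
    show ?thesis
    proof (cases "j = 0")
      case True thus ?thesis using B0[OF N0] by simp
    next
      case False thus ?thesis using e by simp
    qed
  qed
  define A' where "A' = mat m m (\<lambda>(i,j). B $$ (Suc i, Suc j))"
  have A'c: "A' \<in> carrier_mat m m" unfolding A'_def by simp
  have A'i: "A' $$ (i,j) = B $$ (Suc i, Suc j)" if "i < m" "j < m" for i j
    unfolding A'_def using that by simp
  have hA': "hermitian_mat A'"
  proof (rule hermI[OF A'c])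
    fix i j assume ij: "i < m" "j < m"
    have "Suc i < N" "Suc j < N" using ij unfolding N_def by auto
    from herm_index[OF hB Bc this] show "A' $$ (i,j) = cnj (A' $$ (j,i))" using A'i ij by simp
  qed
  obtain V' where uV': "unitary_mat m V'" and V'd: "\<And>i j. i<m \<Longrightarrow> j<m \<Longrightarrow> i \<noteq> j \<Longrightarrow> (mat_adjoint V' * A' * V') $$ (i,j) = 0"
    using Suc.IH[OF A'c hA'] by blast
  have V'c: "V' \<in> carrier_mat m m" using uV' unfolding unitary_mat_def by auto
  define V where "V = mat N N (\<lambda>(i,j). if i = 0 \<and> j = 0 then 1 else if i = 0 \<or> j = 0 then 0 else V' $$ (i - 1, j - 1))"
  have Vc: "V \<in> carrier_mat N N" unfolding V_def by simp
  have V00: "V $$ (0,0) = 1" unfolding V_def N_def by simp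
  have V0S: "V $$ (0, Suc j) = 0" if "j < m" for j unfolding V_def N_def using that by simp
  have VS0: "V $$ (Suc j, 0) = 0" if "j < m" for j unfolding V_def N_def using that by simp
  have VSS: "V $$ (Suc i, Suc j) = V' $$ (i,j)" if "i < m" "j < m" for i j unfolding V_def N_def using that by simp
  have z1: "(\<Sum>i<m. V$$(0,Suc i) * X i) = 0" for X by (rule sum.neutral, auto simp: V0S)
  have z2: "(\<Sum>i<m. X i * cnj (V$$(0,Suc i))) = 0" for X by (rule sum.neutral, auto simp: V0S)
  have uV: "unitary_mat N V"
  proof (rule unitaryI[OF Vc])
    fix j l assume jl: "j < N" "l < N"
    have split: "(\<Sum>i<N. V$$(j,i) * cnj (V$$(l,i))) = V$$(j,0) * cnj (V$$(l,0)) + (\<Sum>i<m. V$$(j,Suc i) * cnj (V$$(l,Suc i)))"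
      unfolding N_def by (rule sum.lessThan_Suc_shift)
    show "(\<Sum>i<N. V$$(j,i) * cnj (V$$(l,i))) = (if j = l then 1 else 0)"
    proof (cases j)
      case 0
      show ?thesis
      proof (cases l)
        case 0 thus ?thesis using split \<open>j = 0\<close> V00 z1 by simp
      next
        case (Suc l')
        hence "l' < m" using jl unfolding N_def by auto
        thus ?thesis using split \<open>j = 0\<close> Suc V00 VS0 z1 by simp
      qed
    next
      case (Suc j')
      hence j': "j' < m" using jl unfolding N_def by auto
      show ?thesis
      proof (cases l)
        case 0 thus ?thesis using split Suc j' V00 VS0 z2 by simp
      next
        case (Suc l')
        hence l': "l' < m" using jl unfolding N_def by auto
        have "(\<Sum>i<m. V$$(j,Suc i) * cnj (V$$(l,Suc i))) = (\<Sum>i<m. V'$$(j',i) * cnj (V'$$(l',i)))"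
          using \<open>j = Suc j'\<close> Suc j' l' by (intro sum.cong, auto simp: VSS)
        also have "\<dots> = (if j' = l' then 1 else 0)" by (rule unitary_rows[OF uV' j' l'])
        finally show ?thesis using split \<open>j = Suc j'\<close> Suc j' l' VS0 by simp
      qed
    qed
  qed
  define U where "U = W * V"
  have uU: "unitary_mat N U" unfolding U_def by (rule unitary_mult[OF uW uV])
  have aW: "mat_adjoint W \<in> carrier_mat N N" and aV: "mat_adjoint V \<in> carrier_mat N N" using Wc Vc by auto
  have eqU: "mat_adjoint U * A * U = mat_adjoint V * B * V"
  proof -
    have "mat_adjoint U * A * U = (mat_adjoint V * mat_adjoint W) * A * (W * V)"
      unfolding U_def by (simp add: adjoint_mult[OF Wc Vc])
    also have "\<dots> = mat_adjoint V * (mat_adjoint W * A) * (W * V)"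
      using aV aW A by (subst assoc_mult_mat[OF aV aW A], simp)
    also have "\<dots> = mat_adjoint V * ((mat_adjoint W * A) * (W * V))"
      using aV aW A Wc Vc by (subst assoc_mult_mat[of _ N N _ N _ N], auto)
    also have "(mat_adjoint W * A) * (W * V) = (mat_adjoint W * A * W) * V"
      using aW A Wc Vc by (subst assoc_mult_mat[of _ N N W N V N], auto)
    also have "mat_adjoint V * (mat_adjoint W * A * W * V) = mat_adjoint V * B * V"
      unfolding B_def using aV aW A Wc Vc by (subst assoc_mult_mat[of _ N N _ N V N], auto)
    finally show ?thesis .
  qed
  have "(mat_adjoint U * A * U) $$ (i,j) = 0" if ij: "i < N" "j < N" "i \<noteq> j" for i j
  proof -
    have "(mat_adjoint U * A * U) $$ (i,j) = (\<Sum>k<N. \<Sum>l<N. cnj (V$$(k,i)) * B$$(k,l) * V$$(l,j))"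
      unfolding eqU using Vc Bc ij by (subst triple_index, auto)
    also have "\<dots> = cnj (V$$(0,i)) * B$$(0,0) * V$$(0,j) + (\<Sum>k<m. \<Sum>l<m. cnj (V$$(Suc k,i)) * B$$(Suc k,Suc l) * V$$(Suc l,j))"
      unfolding N_def sum_Suc2 using B0 B0' N_def by simp
    also have "cnj (V$$(0,i)) * B$$(0,0) * V$$(0,j) = 0"
      using ij V00 V0S unfolding N_def by (cases i; cases j; auto)
    also have "(\<Sum>k<m. \<Sum>l<m. cnj (V$$(Suc k,i)) * B$$(Suc k,Suc l) * V$$(Suc l,j)) = 0"
    proof (cases i)
      case 0 thus ?thesis using VS0 by simp
    next
      case (Suc i')
      show ?thesis
      proof (cases j)
        case 0 thus ?thesis using VS0 by simp
      next
        case (Suc j')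
        have i'j': "i' < m" "j' < m" "i' \<noteq> j'" using ij \<open>i = Suc i'\<close> Suc unfolding N_def by auto
        have "(\<Sum>k<m. \<Sum>l<m. cnj (V$$(Suc k,i)) * B$$(Suc k,Suc l) * V$$(Suc l,j))
           = (\<Sum>k<m. \<Sum>l<m. cnj (V'$$(k,i')) * A'$$(k,l) * V'$$(l,j'))"
          using \<open>i = Suc i'\<close> Suc i'j' by (auto simp: VSS A'_def intro!: sum.cong)
        also have "\<dots> = (mat_adjoint V' * A' * V') $$ (i',j')"
          using V'c A'c i'j' by (subst triple_index, auto)
        also have "\<dots> = 0" using V'd i'j' by auto
        finally show ?thesis .
      qed
    qed
    finally show ?thesis by simp
  qed
  thus ?case using uU unfolding N_def by blast
qed


lemma herm_conj: assumes hA: "hermitian_mat A" and A: "A \<in> carrier_mat N N" and Wc: "W \<in> carrier_mat N N"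
  shows "hermitian_mat (mat_adjoint W * A * W)"
proof -
  have aW: "mat_adjoint W \<in> carrier_mat N N" using Wc by auto
  have "mat_adjoint (mat_adjoint W * A * W) = mat_adjoint W * mat_adjoint (mat_adjoint W * A)"
    by (rule adjoint_mult, use Wc A aW in auto)
  also have "mat_adjoint (mat_adjoint W * A) = mat_adjoint A * W"
    by (subst adjoint_mult[OF aW A], simp add: adjoint_adjoint)
  also have "mat_adjoint A = A" using hA unfolding hermitian_mat_def by simp
  also have "mat_adjoint W * (A * W) = mat_adjoint W * A * W"
    using aW A Wc by (simp add: assoc_mult_mat[OF aW A Wc])
  finally show ?thesis unfolding hermitian_mat_def .
qed

lemma unitary_conj_back: assumes uU: "unitary_mat n U" and A: "A \<in> carrier_mat n n"
  shows "U * (mat_adjoint U * A * U) * mat_adjoint U = A"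
proof -
  have Uc: "U \<in> carrier_mat n n" and aU: "mat_adjoint U \<in> carrier_mat n n"
    and e1: "U * mat_adjoint U = 1\<^sub>m n" using uU unfolding unitary_mat_def by auto
  have "U * (mat_adjoint U * A * U) = U * (mat_adjoint U * A) * U"
    using Uc aU A by (subst assoc_mult_mat[of U n n _ n U n], auto)
  also have "U * (mat_adjoint U * A) = U * mat_adjoint U * A"
    using Uc aU A by (subst assoc_mult_mat[OF Uc aU A], simp)
  also have "\<dots> = A" using e1 A by simp
  finally have "U * (mat_adjoint U * A * U) * mat_adjoint U = A * U * mat_adjoint U" by simp
  also have "\<dots> = A * (U * mat_adjoint U)" using A Uc aU by (rule assoc_mult_mat)
  also have "\<dots> = A" using e1 A by simp
  finally show ?thesis .
qed

lemma spectral: assumes A: "A \<in> carrier_mat n n" and h: "hermitian_mat A"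
  shows "\<exists>U xs. unitary_mat n U \<and> length xs = n \<and> A = U * diag_of xs * mat_adjoint U"
proof -
  obtain U where uU: "unitary_mat n U" and off: "\<And>i j. i<n \<Longrightarrow> j<n \<Longrightarrow> i \<noteq> j \<Longrightarrow> (mat_adjoint U * A * U) $$ (i,j) = 0"
    using spectral_diag[OF A h] by blast
  have Uc: "U \<in> carrier_mat n n" using uU unfolding unitary_mat_def by auto
  define D where "D = mat_adjoint U * A * U"
  have Dc: "D \<in> carrier_mat n n" unfolding D_def using Uc A by auto
  have hD: "hermitian_mat D" unfolding D_def by (rule herm_conj[OF h A Uc])
  define xs where "xs = map (\<lambda>i. Re (D$$(i,i))) [0..<n]"
  have lxs: "length xs = n" unfolding xs_def by simp
  have "D = diag_of xs"
  proof (rule eq_matI)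
    fix i j assume "i < dim_row (diag_of xs)" "j < dim_col (diag_of xs)"
    hence ij: "i < n" "j < n" using lxs by auto
    show "D $$ (i,j) = diag_of xs $$ (i,j)"
    proof (cases "i = j")
      case True
      have "D $$ (i,i) = cnj (D $$ (i,i))" by (rule herm_index[OF hD Dc ij(1) ij(1)])
      hence "Im (D $$ (i,i)) = 0" by (metis cnj.simps(2) complex_cnj_cancel_iff neg_equal_zero)
      hence "D $$ (i,i) = complex_of_real (Re (D $$ (i,i)))" by (simp add: complex_eq_iff)
      thus ?thesis using True ij lxs unfolding xs_def by simp
    next
      case False
      thus ?thesis using off[OF ij False] ij lxs unfolding D_def by simp
    qed
  qed (use Dc lxs in auto)
  hence "A = U * diag_of xs * mat_adjoint U" using unitary_conj_back[OF uU A] unfolding D_def by simp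
  thus ?thesis using uU lxs by blast
qed

definition lin where "lin xs = (\<Prod>x\<leftarrow>xs. [:- complex_of_real x, 1:])"

lemma prod_perm: fixes f :: "_ \<Rightarrow> 'b::comm_monoid_mult" assumes "mset xs = mset ys" shows "prod_list (map f xs) = prod_list (map f ys)"
proof -
  have "prod_list (map f xs) = prod_mset (image_mset f (mset xs))" by (simp only: prod_mset_prod_list[symmetric] mset_map)
  also have "\<dots> = prod_mset (image_mset f (mset ys))" by (simp only: assms)
  also have "\<dots> = prod_list (map f ys)" by (simp only: prod_mset_prod_list[symmetric] mset_map)
  finally show ?thesis .
qed

lemma sum_perm: fixes f :: "_ \<Rightarrow> 'b::comm_monoid_add" assumes "mset xs = mset ys" shows "sum_list (map f xs) = sum_list (map f ys)"
proof -
  have "sum_list (map f xs) = sum_mset (image_mset f (mset xs))" by (simp only: sum_mset_sum_list[symmetric] mset_map)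
  also have "\<dots> = sum_mset (image_mset f (mset ys))" by (simp only: assms)
  also have "\<dots> = sum_list (map f ys)" by (simp only: sum_mset_sum_list[symmetric] mset_map)
  finally show ?thesis .
qed

lemma lin_nz: "lin xs \<noteq> 0"
  unfolding lin_def by (simp add: prod_list_zero_iff, auto)

lemma order_lin: "order a (lin xs) = count (mset (map complex_of_real xs)) a"
proof (induction xs)
  case Nil
  then show ?case unfolding lin_def by (simp add: order_0I)
next
  case (Cons x xs)
  have "lin (x # xs) = [:- complex_of_real x, 1:] * lin xs" unfolding lin_def by simp
  moreover have nz: "[:- complex_of_real x, 1:] * lin xs \<noteq> 0" using lin_nz[of "x # xs"] calculation by simp
  ultimately have "order a (lin (x # xs)) = order a [:- complex_of_real x, 1:] + order a (lin xs)"
    using order_mult[OF nz, of a] by simp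
  thus ?case using Cons by (simp add: order_linear')
qed

lemma lin_inj: assumes "lin xs = lin ys" shows "mset xs = mset ys"
proof -
  have "mset (map complex_of_real xs) = mset (map complex_of_real ys)"
    by (rule multiset_eqI, metis order_lin assms)
  hence "image_mset Re (mset (map complex_of_real xs)) = image_mset Re (mset (map complex_of_real ys))" by simp
  thus ?thesis by (simp add: multiset.map_comp o_def)
qed

lemma char_poly_diag_of: "char_poly (diag_of xs) = lin xs"
proof -
  have "upper_triangular (diag_of xs)" unfolding upper_triangular_def by simp
  from char_poly_upper_triangular[OF diag_of_carrier this]
  have "char_poly (diag_of xs) = (\<Prod>a\<leftarrow>diag_mat (diag_of xs). [:- a, 1:])" .
  also have "diag_mat (diag_of xs) = map complex_of_real xs"
    unfolding diag_mat_def by (rule nth_equalityI, auto)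
  finally show ?thesis unfolding lin_def by (simp add: o_def)
qed

lemma char_poly_decomp: assumes uU: "unitary_mat d U" and l: "length xs = d"
  shows "char_poly (U * diag_of xs * mat_adjoint U) = lin xs"
proof -
  have Uc: "U \<in> carrier_mat d d" using uU unfolding unitary_mat_def by auto
  have aU: "mat_adjoint U \<in> carrier_mat d d" using Uc by simp
  have Dc: "diag_of xs \<in> carrier_mat d d" using diag_of_carrier[of xs] l by simp
  have Ac: "U * diag_of xs * mat_adjoint U \<in> carrier_mat d d" using Uc aU Dc by (metis mult_carrier_mat)
  have dr: "dim_row (U * diag_of xs * mat_adjoint U) = d" using Ac by blast
  have e1: "U * mat_adjoint U = 1\<^sub>m d" and e2: "mat_adjoint U * U = 1\<^sub>m d" using uU unfolding unitary_mat_def by auto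
  have "similar_mat_wit (U * diag_of xs * mat_adjoint U) (diag_of xs) U (mat_adjoint U)"
    unfolding similar_mat_wit_def Let_def dr using Ac Dc Uc aU e1 e2 by blast
  hence "similar_mat (U * diag_of xs * mat_adjoint U) (diag_of xs)" unfolding similar_mat_def by blast
  thus ?thesis using char_poly_similar char_poly_diag_of by metis
qed

lemma eig_desc_props: assumes uU: "unitary_mat d U" and l: "length xs = d" and A: "A = U * diag_of xs * mat_adjoint U"
  shows "mset (eig_desc d A) = mset xs" "length (eig_desc d A) = d" "sorted_wrt (\<ge>) (eig_desc d A)"
proof -
  define ys where "ys = rev (sort xs)"
  have cp: "char_poly A = lin xs" using char_poly_decomp[OF uU l] A by simp
  have P: "length ys = d \<and> sorted_wrt (\<ge>) ys \<and> char_poly A = prod_list (map (\<lambda>x. [:- complex_of_real x, 1:]) ys)"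
  proof (intro conjI)
    show "length ys = d" unfolding ys_def using l by simp
    show "sorted_wrt (\<ge>) ys" unfolding ys_def sorted_wrt_rev by simp
    have "mset xs = mset ys" unfolding ys_def by simp
    from prod_perm[OF this] show "char_poly A = prod_list (map (\<lambda>x. [:- complex_of_real x, 1:]) ys)"
      unfolding cp lin_def .
  qed
  have U: "zs = ys" if "length zs = d \<and> sorted_wrt (\<ge>) zs \<and> char_poly A = prod_list (map (\<lambda>x. [:- complex_of_real x, 1:]) zs)" for zs
  proof -
    have "lin zs = lin xs" using that cp unfolding lin_def by metis
    from lin_inj[OF this] have m: "mset (rev zs) = mset xs" by simp
    have "sorted (rev zs)" using that by (simp add: sorted_wrt_rev)
    from properties_for_sort[OF m this] show ?thesis unfolding ys_def by simp
  qed
  have "eig_desc d A = ys" unfolding eig_desc_def by (rule the_equality, rule P, rule U)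
  hence e: "eig_desc d A = ys" .
  show "mset (eig_desc d A) = mset xs" unfolding e ys_def by simp
  show "length (eig_desc d A) = d" unfolding e using P by blast
  show "sorted_wrt (\<ge>) (eig_desc d A)" unfolding e using P by blast
qed

definition desc_on :: "nat \<Rightarrow> (nat \<Rightarrow> real) \<Rightarrow> bool" where
  "desc_on n p \<longleftrightarrow> (\<forall>i j. i \<le> j \<longrightarrow> j < n \<longrightarrow> p j \<le> p i)"

definition dstoch :: "nat \<Rightarrow> (nat \<Rightarrow> nat \<Rightarrow> real) \<Rightarrow> bool" where
  "dstoch n D \<longleftrightarrow> (\<forall>i j. D j i \<ge> 0) \<and> (\<forall>j<n. (\<Sum>i<n. D j i) = 1) \<and> (\<forall>i<n. (\<Sum>j<n. D j i) = 1)"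

lemma abel_nonneg:
  fixes p e :: "nat \<Rightarrow> real"
  assumes "desc_on n p" "n > 0 \<longrightarrow> p (n - 1) \<ge> 0" "\<forall>k\<le>n. 0 \<le> (\<Sum>i<k. e i)"
  shows "0 \<le> (\<Sum>i<n. p i * e i)"
  using assms
proof (induction n arbitrary: p)
  case 0
  then show ?case by simp
next
  case (Suc n)
  define q where "q i = p i - p n" for i
  have "(\<Sum>i<Suc n. p i * e i) = (\<Sum>i<Suc n. q i * e i) + p n * (\<Sum>i<Suc n. e i)"
    unfolding q_def by (simp add: sum_distrib_left sum.distrib[symmetric] algebra_simps)
  also have "(\<Sum>i<Suc n. q i * e i) = (\<Sum>i<n. q i * e i)" unfolding q_def by simp
  finally have eq: "(\<Sum>i<Suc n. p i * e i) = (\<Sum>i<n. q i * e i) + p n * (\<Sum>i<Suc n. e i)" .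
  have dq: "desc_on n q" using Suc.prems(1) unfolding desc_on_def q_def by auto
  have lq: "n > 0 \<longrightarrow> q (n - 1) \<ge> 0" using Suc.prems(1) unfolding desc_on_def q_def by auto
  have eq': "\<forall>k\<le>n. 0 \<le> (\<Sum>i<k. e i)" using Suc.prems(3) by auto
  have 1: "0 \<le> (\<Sum>i<n. q i * e i)" by (rule Suc.IH[OF dq lq eq'])
  have pn: "0 \<le> p n" using Suc.prems(2) by simp
  have "0 \<le> (\<Sum>i<Suc n. e i)" using Suc.prems(3) by blast
  hence 2: "0 \<le> p n * (\<Sum>i<Suc n. e i)" using pn by simp
  show ?case using eq 1 2 by simp
qed

lemma abel:
  fixes p e :: "nat \<Rightarrow> real"
  assumes d: "desc_on n p" and E: "\<forall>k\<le>n. 0 \<le> (\<Sum>i<k. e i)" and En: "(\<Sum>i<n. e i) = 0"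
  shows "0 \<le> (\<Sum>i<n. p i * e i)"
proof (cases n)
  case 0 thus ?thesis by simp
next
  case (Suc m)
  define q where "q i = p i - p m" for i
  have "(\<Sum>i<n. p i * e i) = (\<Sum>i<n. q i * e i) + p m * (\<Sum>i<n. e i)"
    unfolding q_def by (simp add: sum_distrib_left sum.distrib[symmetric] algebra_simps)
  hence eq: "(\<Sum>i<n. p i * e i) = (\<Sum>i<n. q i * e i)" using En by simp
  have dq: "desc_on n q" using d unfolding desc_on_def q_def by auto
  have lq: "n > 0 \<longrightarrow> q (n - 1) \<ge> 0" unfolding q_def Suc by simp
  show ?thesis using abel_nonneg[OF dq lq E] eq by simp
qed

lemma partial_le:
  fixes c :: "nat \<Rightarrow> real"
  assumes D: "dstoch n D" and c: "desc_on n c" and k: "k \<le> n"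
  shows "(\<Sum>i<k. \<Sum>j<n. D j i * c j) \<le> (\<Sum>i<k. c i)"
proof (cases k)
  case 0 thus ?thesis by simp
next
  case (Suc k')
  define w where "w j = (\<Sum>i<k. D j i)" for j
  define t where "t = c k'"
  have w0: "0 \<le> w j" for j unfolding w_def using D unfolding dstoch_def by (auto intro: sum_nonneg)
  have w1: "w j \<le> 1" if "j < n" for j
  proof -
    have "w j \<le> (\<Sum>i<n. D j i)" unfolding w_def using D k unfolding dstoch_def
      by (intro sum_mono2, auto)
    thus ?thesis using D that unfolding dstoch_def by auto
  qed
  have sw: "(\<Sum>j<n. w j) = real k"
  proof -
    have "(\<Sum>j<n. w j) = (\<Sum>i<k. \<Sum>j<n. D j i)" unfolding w_def by (rule sum.swap)
    also have "\<dots> = (\<Sum>i<k. 1)" using D k unfolding dstoch_def by (intro sum.cong, auto)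
    finally show ?thesis by simp
  qed
  have lhs: "(\<Sum>i<k. \<Sum>j<n. D j i * c j) = (\<Sum>j<n. w j * c j)"
    unfolding w_def by (simp add: sum_distrib_right, rule sum.swap)
  define ind where "ind j = (if j < k then 1 else 0 :: real)" for j
  have rhs: "(\<Sum>i<k. c i) = (\<Sum>j<n. ind j * c j)"
  proof -
    have "(\<Sum>j<n. ind j * c j) = (\<Sum>j<n. if j \<in> {j. j < k} then c j else 0)"
      unfolding ind_def by (intro sum.cong, auto)
    also have "\<dots> = (\<Sum>j\<in>{..<n} \<inter> {j. j < k}. c j)"
      by (simp only: sum.inter_restrict[symmetric] finite_lessThan)
    also have "{..<n} \<inter> {j. j < k} = {..<k}" using k by auto
    finally show ?thesis by simp
  qed
  have sind: "(\<Sum>j<n. ind j) = real k"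
  proof -
    have "(\<Sum>j<n. ind j) = (\<Sum>j<n. if j \<in> {j. j < k} then 1 else 0)"
      unfolding ind_def by (intro sum.cong, auto)
    also have "\<dots> = (\<Sum>j\<in>{..<n} \<inter> {j. j < k}. 1)"
      by (simp only: sum.inter_restrict[symmetric] finite_lessThan)
    also have "{..<n} \<inter> {j. j < k} = {..<k}" using k by auto
    finally show ?thesis by simp
  qed
  have pt: "(ind j - w j) * (c j - t) \<ge> 0" if "j < n" for j
  proof (cases "j < k")
    case True
    hence "c j \<ge> t" using c that k unfolding desc_on_def t_def Suc by auto
    moreover have "ind j - w j \<ge> 0" using w1[OF that] True unfolding ind_def by simp
    ultimately show ?thesis by simp
  next
    case False
    hence "c j \<le> t" using c that k unfolding desc_on_def t_def Suc by auto
    moreover have "ind j - w j \<le> 0" using w0[of j] False unfolding ind_def by simp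
    ultimately show ?thesis by (simp add: mult_nonpos_nonpos)
  qed
  have "0 \<le> (\<Sum>j<n. (ind j - w j) * (c j - t))" by (rule sum_nonneg, use pt in auto)
  also have "\<dots> = (\<Sum>j<n. ind j * c j) - (\<Sum>j<n. w j * c j) - t * ((\<Sum>j<n. ind j) - (\<Sum>j<n. w j))"
    by (simp add: algebra_simps sum_subtractf sum_distrib_left sum.distrib)
  also have "\<dots> = (\<Sum>j<n. ind j * c j) - (\<Sum>j<n. w j * c j)" using sind sw by simp
  finally show ?thesis using lhs rhs by simp
qed

lemma ds_upper:
  fixes p c :: "nat \<Rightarrow> real"
  assumes D: "dstoch n D" and p: "desc_on n p" and c: "desc_on n c"
  shows "(\<Sum>i<n. p i * (\<Sum>j<n. D j i * c j)) \<le> (\<Sum>i<n. p i * c i)"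
proof -
  define e where "e i = c i - (\<Sum>j<n. D j i * c j)" for i
  have E: "\<forall>k\<le>n. 0 \<le> (\<Sum>i<k. e i)"
    unfolding e_def using partial_le[OF D c] by (simp add: sum_subtractf)
  have "(\<Sum>i<n. \<Sum>j<n. D j i * c j) = (\<Sum>j<n. \<Sum>i<n. D j i * c j)" by (rule sum.swap)
  also have "\<dots> = (\<Sum>j<n. (\<Sum>i<n. D j i) * c j)" by (simp add: sum_distrib_right)
  also have "\<dots> = (\<Sum>j<n. c j)" using D unfolding dstoch_def by (intro sum.cong, auto)
  finally have En: "(\<Sum>i<n. e i) = 0" unfolding e_def by (simp add: sum_subtractf)
  have "0 \<le> (\<Sum>i<n. p i * e i)" by (rule abel[OF p E En])
  thus ?thesis unfolding e_def by (simp add: algebra_simps sum_subtractf)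
qed


lemma sum_reflect: "(\<Sum>j<n. f (n - Suc j)) = (\<Sum>j<n. f j)"
  by (rule sum.reindex_bij_witness[of _ "\<lambda>j. n - Suc j" "\<lambda>j. n - Suc j"], auto)

lemma ds_lower:
  fixes p c :: "nat \<Rightarrow> real"
  assumes D: "dstoch n D" and p: "desc_on n p" and c: "desc_on n c"
  shows "(\<Sum>i<n. p i * c (n - Suc i)) \<le> (\<Sum>i<n. p i * (\<Sum>j<n. D j i * c j))"
proof -
  define c' where "c' j = - c (n - Suc j)" for j
  define D' where "D' j i = D (n - Suc j) i" for j i
  have dc': "desc_on n c'" using c unfolding desc_on_def c'_def by auto
  have dD': "dstoch n D'" unfolding dstoch_def
  proof (intro conjI allI impI)
    show "D' j i \<ge> 0" for i j using D unfolding dstoch_def D'_def by auto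
    show "(\<Sum>i<n. D' j i) = 1" if "j < n" for j using D that unfolding dstoch_def D'_def by auto
    show "(\<Sum>j<n. D' j i) = 1" if "i < n" for i using D that unfolding dstoch_def D'_def
      by (simp add: sum_reflect[of "\<lambda>j. D j i"])
  qed
  have inner: "(\<Sum>j<n. D' j i * c' j) = - (\<Sum>j<n. D j i * c j)" for i
  proof -
    have "(\<Sum>j<n. D' j i * c' j) = - (\<Sum>j<n. D (n - Suc j) i * c (n - Suc j))"
      unfolding D'_def c'_def by (simp add: sum_negf)
    also have "\<dots> = - (\<Sum>j<n. D j i * c j)" by (simp only: sum_reflect[of "\<lambda>j. D j i * c j"])
    finally show ?thesis .
  qed
  from ds_upper[OF dD' p dc'] have "(\<Sum>i<n. p i * - (\<Sum>j<n. D j i * c j)) \<le> (\<Sum>i<n. p i * c' i)"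
    by (simp only: inner)
  thus ?thesis unfolding c'_def by (simp add: sum_negf)
qed

lemma ds_perm:
  fixes p c :: "nat \<Rightarrow> real"
  assumes D: "dstoch n D" and p: "desc_on n p" and c: "desc_on n c"
    and pi: "pp permutes {..<n}" and ka: "kk permutes {..<n}"
  shows "(\<Sum>i<n. p (pp i) * (\<Sum>j<n. D j i * c (kk j))) \<le> (\<Sum>i<n. p i * c i)"
    "(\<Sum>i<n. p i * c (n - Suc i)) \<le> (\<Sum>i<n. p (pp i) * (\<Sum>j<n. D j i * c (kk j)))"
proof -
  define D' where "D' y x = D (inv_into UNIV kk y) (inv_into UNIV pp x)" for y x
  have ipi: "inv_into UNIV pp permutes {..<n}" and ika: "inv_into UNIV kk permutes {..<n}" using pi ka by (auto intro: permutes_inv)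
  have dD': "dstoch n D'" unfolding dstoch_def
  proof (intro conjI allI impI)
    show "D' j i \<ge> 0" for i j using D unfolding dstoch_def D'_def by auto
    show "(\<Sum>i<n. D' j i) = 1" if "j < n" for j
    proof -
      have "(\<Sum>i<n. D' j i) = (\<Sum>i<n. D (inv_into UNIV kk j) i)"
        unfolding D'_def using sum.permute[OF ipi, of "\<lambda>i. D (inv_into UNIV kk j) i"] by (simp add: o_def)
      also have "\<dots> = 1" using D permutes_in_image[OF ika, of j] that unfolding dstoch_def by auto
      finally show ?thesis .
    qed
    show "(\<Sum>j<n. D' j i) = 1" if "i < n" for i
    proof -
      have "(\<Sum>j<n. D' j i) = (\<Sum>j<n. D j (inv_into UNIV pp i))"
        unfolding D'_def using sum.permute[OF ika, of "\<lambda>j. D j (inv_into UNIV pp i)"] by (simp add: o_def)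
      also have "\<dots> = 1" using D permutes_in_image[OF ipi, of i] that unfolding dstoch_def by auto
      finally show ?thesis .
    qed
  qed
  have eq: "(\<Sum>i<n. p (pp i) * (\<Sum>j<n. D j i * c (kk j))) = (\<Sum>x<n. p x * (\<Sum>y<n. D' y x * c y))"
  proof -
    have inner: "(\<Sum>j<n. D j i * c (kk j)) = (\<Sum>y<n. D' y (pp i) * c y)" for i
    proof -
      have "(\<Sum>y<n. D' y (pp i) * c y) = (\<Sum>j<n. D' (kk j) (pp i) * c (kk j))"
        using sum.permute[OF ka, of "\<lambda>y. D' y (pp i) * c y"] by (simp add: o_def)
      also have "\<dots> = (\<Sum>j<n. D j i * c (kk j))"
        unfolding D'_def by (simp add: permutes_inverses(2)[OF ka] permutes_inverses(2)[OF pi])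
      finally show ?thesis by simp
    qed
    have "(\<Sum>i<n. p (pp i) * (\<Sum>j<n. D j i * c (kk j))) = (\<Sum>i<n. p (pp i) * (\<Sum>y<n. D' y (pp i) * c y))"
      by (simp only: inner)
    also have "\<dots> = (\<Sum>x<n. p x * (\<Sum>y<n. D' y x * c y))"
      using sum.permute[OF pi, of "\<lambda>x. p x * (\<Sum>y<n. D' y x * c y)"] by (simp add: o_def)
    finally show ?thesis .
  qed
  show "(\<Sum>i<n. p (pp i) * (\<Sum>j<n. D j i * c (kk j))) \<le> (\<Sum>i<n. p i * c i)"
    unfolding eq by (rule ds_upper[OF dD' p c])
  show "(\<Sum>i<n. p i * c (n - Suc i)) \<le> (\<Sum>i<n. p (pp i) * (\<Sum>j<n. D j i * c (kk j)))"
    unfolding eq by (rule ds_lower[OF dD' p c])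
qed

lemma mat_fun_spec: assumes A: "A \<in> carrier_mat d d" and h: "hermitian_mat A"
  shows "\<exists>U xs. unitary_mat d U \<and> length xs = d \<and> A = U * diag_of xs * mat_adjoint U \<and>
      mat_fun d f A = U * diag_of (map f xs) * mat_adjoint U"
proof -
  obtain U xs where "unitary_mat d U" "length xs = d" "A = U * diag_of xs * mat_adjoint U"
    using spectral[OF A h] by blast
  hence ex: "\<exists>B. \<exists>U xs. unitary_mat d U \<and> length xs = d \<and>
      A = U * diag_of xs * mat_adjoint U \<and> B = U * diag_of (map f xs) * mat_adjoint U" by blast
  show ?thesis unfolding mat_fun_def using someI_ex[OF ex] by blast
qed

lemma sum4_swap: "(\<Sum>k<n. \<Sum>m<n. \<Sum>i<n. \<Sum>j<n. f k m i j) = (\<Sum>i<n. \<Sum>j<n. \<Sum>k<n. \<Sum>m<n. f k m i j)"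
proof -
  have "(\<Sum>k<n. \<Sum>m<n. \<Sum>i<n. \<Sum>j<n. f k m i j) = (\<Sum>k<n. \<Sum>i<n. \<Sum>m<n. \<Sum>j<n. f k m i j)"
    by (rule sum.cong, simp, rule sum.swap)
  also have "\<dots> = (\<Sum>k<n. \<Sum>i<n. \<Sum>j<n. \<Sum>m<n. f k m i j)"
    by (rule sum.cong, simp, rule sum.cong, simp, rule sum.swap)
  also have "\<dots> = (\<Sum>i<n. \<Sum>k<n. \<Sum>j<n. \<Sum>m<n. f k m i j)"
    by (rule sum.swap)
  also have "\<dots> = (\<Sum>i<n. \<Sum>j<n. \<Sum>k<n. \<Sum>m<n. f k m i j)"
    by (rule sum.cong, simp, rule sum.swap)
  finally show ?thesis .
qed

lemma mtrace_sum: "A \<in> carrier_mat d d \<Longrightarrow> mtrace A = (\<Sum>k<d. A $$ (k,k))"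
  unfolding mtrace_def by auto

lemma tr_formula: assumes V: "V \<in> carrier_mat d d" and W: "W \<in> carrier_mat d d"
  and la: "length a = d" and lb: "length b = d"
  shows "mtrace ((V * diag_of a * mat_adjoint V) * (W * diag_of b * mat_adjoint W)) =
    complex_of_real (\<Sum>i<d. \<Sum>j<d. a!i * b!j * (cmod (\<Sum>k<d. cnj (W$$(k,j)) * V$$(k,i)))^2)"
proof -
  have dims: "dim_row V = d" "dim_col V = d" "dim_row W = d" "dim_col W = d" using V W by auto
  define P where "P = V * diag_of a * mat_adjoint V"
  define Q where "Q = W * diag_of b * mat_adjoint W"
  have Pc: "P \<in> carrier_mat d d" unfolding P_def using V la by (metis adj_carrier diag_of_carrier mult_carrier_mat)
  have Qc: "Q \<in> carrier_mat d d" unfolding Q_def using W lb by (metis adj_carrier diag_of_carrier mult_carrier_mat)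
  have "mtrace (P * Q) = (\<Sum>k<d. (P * Q) $$ (k,k))" using Pc Qc by (subst mtrace_sum, auto)
  also have "\<dots> = (\<Sum>k<d. \<Sum>m<d. P $$ (k,m) * Q $$ (m,k))"
    using Pc Qc by (intro sum.cong, simp, subst mult_index, auto)
  also have "\<dots> = (\<Sum>k<d. \<Sum>m<d. (\<Sum>i<d. V$$(k,i) * complex_of_real (a!i) * cnj (V$$(m,i))) *
                                   (\<Sum>j<d. W$$(m,j) * complex_of_real (b!j) * cnj (W$$(k,j))))"
  proof (rule sum.cong[OF refl], rule sum.cong[OF refl])
    fix k m assume km: "k \<in> {..<d}" "m \<in> {..<d}"
    show "P $$ (k,m) * Q $$ (m,k) = (\<Sum>i<d. V$$(k,i) * complex_of_real (a!i) * cnj (V$$(m,i))) *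
                                   (\<Sum>j<d. W$$(m,j) * complex_of_real (b!j) * cnj (W$$(k,j)))"
      unfolding P_def Q_def using udu_index[OF V la, of k m] udu_index[OF W lb, of m k] km by simp
  qed
  also have "\<dots> = (\<Sum>k<d. \<Sum>m<d. \<Sum>i<d. \<Sum>j<d. (V$$(k,i) * complex_of_real (a!i) * cnj (V$$(m,i))) *
                                   (W$$(m,j) * complex_of_real (b!j) * cnj (W$$(k,j))))"
    by (simp only: sum_product)
  also have "\<dots> = (\<Sum>i<d. \<Sum>j<d. \<Sum>k<d. \<Sum>m<d. (V$$(k,i) * complex_of_real (a!i) * cnj (V$$(m,i))) *
                                   (W$$(m,j) * complex_of_real (b!j) * cnj (W$$(k,j))))"
    by (rule sum4_swap)
  also have "\<dots> = (\<Sum>i<d. \<Sum>j<d. complex_of_real (a!i * b!j) *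
        ((\<Sum>k<d. V$$(k,i) * cnj (W$$(k,j))) * (\<Sum>m<d. cnj (V$$(m,i)) * W$$(m,j))))"
  proof (rule sum.cong[OF refl], rule sum.cong[OF refl])
    fix i j
    have "complex_of_real (a!i * b!j) * ((\<Sum>k<d. V$$(k,i) * cnj (W$$(k,j))) * (\<Sum>m<d. cnj (V$$(m,i)) * W$$(m,j)))
      = (\<Sum>k<d. \<Sum>m<d. complex_of_real (a!i * b!j) * ((V$$(k,i) * cnj (W$$(k,j))) * (cnj (V$$(m,i)) * W$$(m,j))))"
      by (subst sum_product, simp add: sum_distrib_left)
    also have "\<dots> = (\<Sum>k<d. \<Sum>m<d. (V$$(k,i) * complex_of_real (a!i) * cnj (V$$(m,i))) *
                                   (W$$(m,j) * complex_of_real (b!j) * cnj (W$$(k,j))))"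
      by (rule sum.cong[OF refl], rule sum.cong[OF refl], simp add: mult_ac)
    finally show "(\<Sum>k<d. \<Sum>m<d. (V$$(k,i) * complex_of_real (a!i) * cnj (V$$(m,i))) *
                                   (W$$(m,j) * complex_of_real (b!j) * cnj (W$$(k,j)))) =
        complex_of_real (a!i * b!j) * ((\<Sum>k<d. V$$(k,i) * cnj (W$$(k,j))) * (\<Sum>m<d. cnj (V$$(m,i)) * W$$(m,j)))" by simp
  qed
  also have "\<dots> = (\<Sum>i<d. \<Sum>j<d. complex_of_real (a!i * b!j * (cmod (\<Sum>k<d. cnj (W$$(k,j)) * V$$(k,i)))^2))"
  proof (rule sum.cong, simp, rule sum.cong, simp)
    fix i j
    define z where "z = (\<Sum>k<d. cnj (W$$(k,j)) * V$$(k,i))"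
    have 1: "(\<Sum>k<d. V$$(k,i) * cnj (W$$(k,j))) = z" unfolding z_def by (simp add: mult.commute)
    have 2: "(\<Sum>m<d. cnj (V$$(m,i)) * W$$(m,j)) = cnj z" unfolding z_def by (simp add: mult.commute)
    show "complex_of_real (a!i * b!j) * ((\<Sum>k<d. V$$(k,i) * cnj (W$$(k,j))) * (\<Sum>m<d. cnj (V$$(m,i)) * W$$(m,j)))
        = complex_of_real (a!i * b!j * (cmod z)^2)"
      unfolding 1 2 cnorm by simp
  qed
  also have "\<dots> = complex_of_real (\<Sum>i<d. \<Sum>j<d. a!i * b!j * (cmod (\<Sum>k<d. cnj (W$$(k,j)) * V$$(k,i)))^2)"
    by (simp only: of_real_sum)
  finally show ?thesis unfolding P_def Q_def .
qed


lemma decomp_col: assumes uW: "unitary_mat d W" and lb: "length b = d" and A: "A = W * diag_of b * mat_adjoint W"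
  and j: "j < d" and k: "k < d"
  shows "(A *\<^sub>v col W j) $ k = W$$(k,j) * complex_of_real (b!j)"
proof -
  have Wc: "W \<in> carrier_mat d d" using uW unfolding unitary_mat_def by auto
  have Ac: "A \<in> carrier_mat d d" unfolding A using Wc lb by (metis adj_carrier diag_of_carrier mult_carrier_mat)
  have "(A *\<^sub>v col W j) $ k = (\<Sum>m<d. A$$(k,m) * W$$(m,j))"
    using Ac Wc k j by (auto simp: scalar_prod_def atLeast0LessThan intro!: sum.cong)
  also have "\<dots> = (\<Sum>m<d. (\<Sum>i<d. W$$(k,i) * complex_of_real (b!i) * cnj (W$$(m,i))) * W$$(m,j))"
    unfolding A using udu_index[OF Wc lb k] by simp
  also have "\<dots> = (\<Sum>m<d. \<Sum>i<d. W$$(k,i) * complex_of_real (b!i) * (cnj (W$$(m,i)) * W$$(m,j)))"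
    by (simp add: sum_distrib_right mult.assoc)
  also have "\<dots> = (\<Sum>i<d. \<Sum>m<d. W$$(k,i) * complex_of_real (b!i) * (cnj (W$$(m,i)) * W$$(m,j)))"
    by (rule sum.swap)
  also have "\<dots> = (\<Sum>i<d. W$$(k,i) * complex_of_real (b!i) * (if i = j then 1 else 0))"
  proof (rule sum.cong[OF refl])
    fix i assume "i \<in> {..<d}"
    hence i: "i < d" by simp
    have "(\<Sum>m<d. W$$(k,i) * complex_of_real (b!i) * (cnj (W$$(m,i)) * W$$(m,j))) =
       W$$(k,i) * complex_of_real (b!i) * (\<Sum>m<d. cnj (W$$(m,i)) * W$$(m,j))"
      by (simp only: sum_distrib_left)
    also have "\<dots> = W$$(k,i) * complex_of_real (b!i) * (if i = j then 1 else 0)"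
      by (simp only: unitary_cols[OF uW i j])
    finally show "(\<Sum>m<d. W$$(k,i) * complex_of_real (b!i) * (cnj (W$$(m,i)) * W$$(m,j))) =
       W$$(k,i) * complex_of_real (b!i) * (if i = j then 1 else 0)" .
  qed
  also have "\<dots> = (\<Sum>i<d. if i = j then W$$(k,i) * complex_of_real (b!i) else 0)"
    by (rule sum.cong, auto)
  also have "\<dots> = W$$(k,j) * complex_of_real (b!j)" using j by simp
  finally show ?thesis .
qed

lemma col_norm: assumes uW: "unitary_mat d W" and j: "j < d"
  shows "(\<Sum>k<d. cnj (W$$(k,j)) * W$$(k,j)) = 1"
  using unitary_cols[OF uW j j] by simp

lemma ev_psd_nonneg: assumes p: "psd_mat d A" and uW: "unitary_mat d W" and lb: "length b = d"
  and A: "A = W * diag_of b * mat_adjoint W" and j: "j < d"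
  shows "b!j \<ge> 0"
proof -
  have Wc: "W \<in> carrier_mat d d" using uW unfolding unitary_mat_def by auto
  define v where "v = col W j"
  have v: "v \<in> carrier_vec d" unfolding v_def using Wc by auto
  have Av: "A *\<^sub>v v \<in> carrier_vec d" using p v unfolding psd_mat_def by auto
  have "0 \<le> Re (conjugate v \<bullet> (A *\<^sub>v v))" using p v unfolding psd_mat_def by auto
  also have "conjugate v \<bullet> (A *\<^sub>v v) = (\<Sum>k<d. conjugate v $ k * (A *\<^sub>v v) $ k)"
  proof -
    have "dim_row A = d" using p unfolding psd_mat_def by auto
    thus ?thesis unfolding scalar_prod_def by (simp add: atLeast0LessThan del: index_mult_mat_vec)
  qed
  also have "\<dots> = (\<Sum>k<d. cnj (W$$(k,j)) * (W$$(k,j) * complex_of_real (b!j)))"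
  proof (rule sum.cong[OF refl])
    fix k assume "k \<in> {..<d}" hence k: "k < d" by simp
    show "conjugate v $ k * (A *\<^sub>v v) $ k = cnj (W$$(k,j)) * (W$$(k,j) * complex_of_real (b!j))"
      unfolding v_def using decomp_col[OF uW lb A j k] Wc k j by simp
  qed
  also have "\<dots> = complex_of_real (b!j) * (\<Sum>k<d. cnj (W$$(k,j)) * W$$(k,j))"
    by (simp add: sum_distrib_left mult_ac)
  also have "\<dots> = complex_of_real (b!j)" using col_norm[OF uW j] by simp
  finally show ?thesis by simp
qed

lemma ev_inv_nonzero: assumes inv: "invertible_mat A" and uW: "unitary_mat d W" and lb: "length b = d"
  and A: "A = W * diag_of b * mat_adjoint W" and j: "j < d"
  shows "b!j \<noteq> 0"
proof
  assume b0: "b!j = 0"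
  have Wc: "W \<in> carrier_mat d d" using uW unfolding unitary_mat_def by auto
  have Ac: "A \<in> carrier_mat d d" unfolding A using Wc lb by (metis adj_carrier diag_of_carrier mult_carrier_mat)
  define v where "v = col W j"
  have v: "v \<in> carrier_vec d" unfolding v_def using Wc by auto
  have Av: "A *\<^sub>v v = 0\<^sub>v d"
    by (rule eq_vecI, use decomp_col[OF uW lb A j] b0 Ac v in \<open>auto simp: v_def\<close>)
  obtain B where AB: "A * B = 1\<^sub>m (dim_row A)" and BA: "B * A = 1\<^sub>m (dim_row B)"
    using inv unfolding invertible_mat_def inverts_mat_def by blast
  have dB: "dim_row B = d" using BA Ac by (metis carrier_matD(2) index_mult_mat(3) index_one_mat(3))
  have dB2: "dim_col B = d" using AB Ac by (metis carrier_matD(1) index_mult_mat(3) index_one_mat(3))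
  have Bc: "B \<in> carrier_mat d d" using dB dB2 by auto
  have "v = (B * A) *\<^sub>v v" using BA dB v by simp
  also have "\<dots> = B *\<^sub>v (A *\<^sub>v v)" using Bc Ac v by (rule assoc_mult_mat_vec)
  also have "\<dots> = 0\<^sub>v d" unfolding Av using Bc by auto
  finally have "v = 0\<^sub>v d" .
  hence "(\<Sum>k<d. cnj (W$$(k,j)) * W$$(k,j)) = 0"
    using Wc j unfolding v_def by (auto intro!: sum.neutral simp: vec_eq_iff)
  thus False using col_norm[OF uW j] by simp
qed

definition ind :: "bool \<Rightarrow> real" where "ind P = (if P then 1 else 0)"

lemma ind_sq: "ind P * ind P = ind P" unfolding ind_def by simp

lemma h1: assumes "y < (n::nat)" shows "(\<Sum>x<n. ind (y = x) * g x) = g y"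
proof -
  have "(\<Sum>x<n. ind (y = x) * g x) = (\<Sum>x<n. if y = x then g x else 0)" unfolding ind_def by (rule sum.cong, auto)
  also have "\<dots> = g y" using assms by simp
  finally show ?thesis .
qed

lemma sum_complex: "(\<Sum>i\<in>S. Complex (f i) (g i) * cnj (Complex (h i) (k i))) =
   Complex (\<Sum>i\<in>S. f i * h i + g i * k i) (\<Sum>i\<in>S. g i * h i - f i * k i)"
  by (simp add: complex_eq_iff Re_sum Im_sum)

definition Mt :: "nat \<Rightarrow> (nat \<Rightarrow> nat) \<Rightarrow> (nat \<Rightarrow> nat) \<Rightarrow> real \<Rightarrow> real \<Rightarrow> complex mat" where
  "Mt d pp kk cc ss = mat d d (\<lambda>(j,i). Complex (cc * ind (kk j = pp i)) (ss * ind (kk j = d - Suc (pp i))))"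

lemma Mt_index: "j < d \<Longrightarrow> i < d \<Longrightarrow> Mt d pp kk cc ss $$ (j,i) = Complex (cc * ind (kk j = pp i)) (ss * ind (kk j = d - Suc (pp i)))"
  unfolding Mt_def by simp

lemma Mt_cmod: "j < d \<Longrightarrow> i < d \<Longrightarrow> (cmod (Mt d pp kk cc ss $$ (j,i)))^2 = cc^2 * ind (kk j = pp i) + ss^2 * ind (kk j = d - Suc (pp i))"
  unfolding Mt_index cmod_def by (simp add: power2_eq_square ind_def)

lemma Mt_unitary: assumes pp: "pp permutes {..<d}" and kk: "kk permutes {..<d}" and cs: "cc^2 + ss^2 = 1"
  shows "unitary_mat d (Mt d pp kk cc ss)"
proof (rule unitaryI)
  show "Mt d pp kk cc ss \<in> carrier_mat d d" unfolding Mt_def by simp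
  fix j l assume jl: "j < d" "l < d"
  define y1 where "y1 = kk j"
  define y2 where "y2 = kk l"
  have y: "y1 < d" "y2 < d" unfolding y1_def y2_def using jl permutes_in_image[OF kk] by auto
  define rv where "rv x = d - Suc x" for x
  define F where "F x = Complex (cc * ind (y1 = x)) (ss * ind (y1 = rv x)) * cnj (Complex (cc * ind (y2 = x)) (ss * ind (y2 = rv x)))" for x
  have "(\<Sum>i<d. Mt d pp kk cc ss $$ (j,i) * cnj (Mt d pp kk cc ss $$ (l,i))) = (\<Sum>i<d. F (pp i))"
    unfolding F_def y1_def y2_def rv_def using jl by (intro sum.cong, auto simp: Mt_index)
  also have "\<dots> = (\<Sum>x<d. F x)" using sum.permute[OF pp, of F] by (simp add: o_def)
  also have "\<dots> = Complex (\<Sum>x<d. cc * ind (y1 = x) * (cc * ind (y2 = x)) + ss * ind (y1 = rv x) * (ss * ind (y2 = rv x)))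
       (\<Sum>x<d. ss * ind (y1 = rv x) * (cc * ind (y2 = x)) - cc * ind (y1 = x) * (ss * ind (y2 = rv x)))"
    unfolding F_def by (rule sum_complex)
  also have "(\<Sum>x<d. cc * ind (y1 = x) * (cc * ind (y2 = x)) + ss * ind (y1 = rv x) * (ss * ind (y2 = rv x)))
     = cc^2 * (\<Sum>x<d. ind (y1 = x) * ind (y2 = x)) + ss^2 * (\<Sum>x<d. ind (y1 = rv x) * ind (y2 = rv x))"
    by (simp add: sum.distrib sum_distrib_left power2_eq_square mult_ac)
  also have "(\<Sum>x<d. ind (y1 = rv x) * ind (y2 = rv x)) = (\<Sum>x<d. ind (y1 = x) * ind (y2 = x))"
    unfolding rv_def by (rule sum_reflect)
  also have "(\<Sum>x<d. ind (y1 = x) * ind (y2 = x)) = ind (y2 = y1)" by (rule h1[OF y(1)])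
  also have "(\<Sum>x<d. ss * ind (y1 = rv x) * (cc * ind (y2 = x)) - cc * ind (y1 = x) * (ss * ind (y2 = rv x)))
     = ss * cc * ((\<Sum>x<d. ind (y2 = x) * ind (y1 = rv x)) - (\<Sum>x<d. ind (y1 = x) * ind (y2 = rv x)))"
    by (simp add: sum_subtractf sum_distrib_left[symmetric] right_diff_distrib mult_ac)
  also have "(\<Sum>x<d. ind (y2 = x) * ind (y1 = rv x)) = ind (y1 = rv y2)" by (rule h1[OF y(2)])
  also have "(\<Sum>x<d. ind (y1 = x) * ind (y2 = rv x)) = ind (y2 = rv y1)" by (rule h1[OF y(1)])
  also have "ind (y1 = rv y2) = ind (y2 = rv y1)" unfolding rv_def using y by (auto simp: ind_def)
  also have "ind (y2 = y1) = ind (j = l)" unfolding y1_def y2_def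
    using permutes_inj[OF kk] by (auto simp: ind_def inj_eq)
  finally show "(\<Sum>i<d. Mt d pp kk cc ss $$ (j,i) * cnj (Mt d pp kk cc ss $$ (l,i))) = (if j = l then 1 else 0)"
    using cs by (auto simp: ind_def complex_eq_iff distrib_right[symmetric])
qed


lemma h1': assumes "y < (n::nat)" shows "(\<Sum>x<n. ind (x = y) * g x) = g y"
  using h1[OF assms, of g] by (simp add: eq_commute[of _ y])

lemma Mt_value: assumes pp: "pp permutes {..<d}" and kk: "kk permutes {..<d}"
  shows "(\<Sum>i<d. p (pp i) * (\<Sum>j<d. (cmod (Mt d pp kk cc ss $$ (j,i)))^2 * c (kk j)))
     = cc^2 * (\<Sum>x<d. p x * c x) + ss^2 * (\<Sum>x<d. p x * c (d - Suc x))"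
proof -
  have inner: "(\<Sum>j<d. (cmod (Mt d pp kk cc ss $$ (j,i)))^2 * c (kk j)) = cc^2 * c (pp i) + ss^2 * c (d - Suc (pp i))"
    if i: "i < d" for i
  proof -
    have ppi: "pp i < d" using permutes_in_image[OF pp] i by auto
    define G where "G y = (cc^2 * ind (y = pp i) + ss^2 * ind (y = d - Suc (pp i))) * c y" for y
    have "(\<Sum>j<d. (cmod (Mt d pp kk cc ss $$ (j,i)))^2 * c (kk j)) = (\<Sum>j<d. G (kk j))"
      unfolding G_def using i by (intro sum.cong, auto simp: Mt_cmod)
    also have "\<dots> = (\<Sum>y<d. G y)" using sum.permute[OF kk, of G] by (simp add: o_def)
    also have "\<dots> = cc^2 * (\<Sum>y<d. ind (y = pp i) * c y) + ss^2 * (\<Sum>y<d. ind (y = d - Suc (pp i)) * c y)"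
      unfolding G_def by (simp add: sum.distrib sum_distrib_left algebra_simps)
    also have "\<dots> = cc^2 * c (pp i) + ss^2 * c (d - Suc (pp i))"
      using ppi by (simp add: h1')
    finally show ?thesis .
  qed
  have "(\<Sum>i<d. p (pp i) * (\<Sum>j<d. (cmod (Mt d pp kk cc ss $$ (j,i)))^2 * c (kk j)))
     = (\<Sum>i<d. (\<lambda>x. p x * (cc^2 * c x + ss^2 * c (d - Suc x))) (pp i))"
    using inner by (intro sum.cong, auto)
  also have "\<dots> = (\<Sum>x<d. p x * (cc^2 * c x + ss^2 * c (d - Suc x)))"
    using sum.permute[OF pp, of "\<lambda>x. p x * (cc^2 * c x + ss^2 * c (d - Suc x))"] by (simp add: o_def)
  also have "\<dots> = cc^2 * (\<Sum>x<d. p x * c x) + ss^2 * (\<Sum>x<d. p x * c (d - Suc x))"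
    by (simp add: sum.distrib sum_distrib_left algebra_simps)
  finally show ?thesis .
qed

lemma conj_decomp: assumes uU: "unitary_mat d U" and uV: "unitary_mat d V" and la: "length a = d"
  and r: "R = V * diag_of a * mat_adjoint V"
  shows "U * R * mat_adjoint U = (U * V) * diag_of a * mat_adjoint (U * V)"
proof -
  have Uc: "U \<in> carrier_mat d d" and Vc: "V \<in> carrier_mat d d" using uU uV unfolding unitary_mat_def by auto
  have aU: "mat_adjoint U \<in> carrier_mat d d" and aV: "mat_adjoint V \<in> carrier_mat d d" using Uc Vc by auto
  have Dc: "diag_of a \<in> carrier_mat d d" using diag_of_carrier[of a] la by simp
  have VD: "V * diag_of a \<in> carrier_mat d d" using Vc Dc by simp
  have UVD: "U * V * diag_of a \<in> carrier_mat d d" using Uc Vc Dc by simp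
  have "U * R * mat_adjoint U = U * (V * diag_of a * mat_adjoint V) * mat_adjoint U" unfolding r ..
  also have "U * (V * diag_of a * mat_adjoint V) = U * (V * diag_of a) * mat_adjoint V"
    by (rule assoc_mult_mat[symmetric, OF Uc VD aV])
  also have "U * (V * diag_of a) = U * V * diag_of a"
    by (rule assoc_mult_mat[symmetric, OF Uc Vc Dc])
  also have "U * V * diag_of a * mat_adjoint V * mat_adjoint U = U * V * diag_of a * (mat_adjoint V * mat_adjoint U)"
    by (rule assoc_mult_mat[OF UVD aV aU])
  also have "mat_adjoint V * mat_adjoint U = mat_adjoint (U * V)" by (rule adjoint_mult[symmetric, OF Uc Vc])
  finally show ?thesis .
qed

lemma mtrace_minus: assumes "A \<in> carrier_mat d d" "B \<in> carrier_mat d d"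
  shows "mtrace (A - B) = mtrace A - mtrace B"
proof -
  have "mtrace (A - B) = (\<Sum>k<d. (A - B) $$ (k,k))" using assms by (subst mtrace_sum, auto)
  also have "\<dots> = (\<Sum>k<d. A $$ (k,k) - B $$ (k,k))" using assms by (intro sum.cong, auto)
  also have "\<dots> = mtrace A - mtrace B" using assms by (simp add: sum_subtractf mtrace_sum)
  finally show ?thesis .
qed

lemma sum_nth_perm: assumes m: "mset xs = mset ys" and l: "length xs = d"
  shows "(\<Sum>i<d. f (xs!i)) = (\<Sum>i<d. f (ys!i))"
proof -
  have ly: "length ys = d" using mset_eq_length[OF m] l by simp
  have "(\<Sum>i<d. f (xs!i)) = sum_list (map f xs)" using l by (simp add: sum_list_sum_nth atLeast0LessThan)
  also have "\<dots> = sum_list (map f ys)" by (rule sum_perm[OF m])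
  also have "\<dots> = (\<Sum>i<d. f (ys!i))" using ly by (simp add: sum_list_sum_nth atLeast0LessThan)
  finally show ?thesis .
qed

lemma desc_of_sorted: assumes "sorted_wrt (\<ge>) xs" "length xs = d"
  shows "desc_on d (\<lambda>i. xs ! i)"
  unfolding desc_on_def
proof (intro allI impI)
  fix i j :: nat assume ij: "i \<le> j" "j < d"
  show "xs ! j \<le> xs ! i"
  proof (cases "i = j")
    case False
    hence "i < j" using ij by simp
    thus ?thesis using sorted_wrt_nth_less[OF assms(1) _ ] ij assms(2) by auto
  qed simp
qed

lemma dstoch_unitary: assumes uM: "unitary_mat d M"
  shows "dstoch d (\<lambda>j i. (cmod (M$$(j,i)))^2)"
  unfolding dstoch_def
proof (intro conjI allI impI)
  show "0 \<le> (cmod (M$$(j,i)))^2" for i j by simp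
  show "(\<Sum>i<d. (cmod (M$$(j,i)))^2) = 1" if j: "j < d" for j
  proof -
    have "complex_of_real (\<Sum>i<d. (cmod (M$$(j,i)))^2) = (\<Sum>i<d. M$$(j,i) * cnj (M$$(j,i)))"
      by (simp add: cnorm of_real_sum)
    also have "\<dots> = 1" using unitary_rows[OF uM j j] by simp
    finally show ?thesis by (simp only: of_real_eq_1_iff)
  qed
  show "(\<Sum>j<d. (cmod (M$$(j,i)))^2) = 1" if i: "i < d" for i
  proof -
    have "complex_of_real (\<Sum>j<d. (cmod (M$$(j,i)))^2) = (\<Sum>j<d. cnj (M$$(j,i)) * M$$(j,i))"
      by (simp add: cnorm of_real_sum mult.commute)
    also have "\<dots> = 1" using unitary_cols[OF uM i i] by simp
    finally show ?thesis by (simp only: of_real_eq_1_iff)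
  qed
qed

lemma trace_self: assumes uV: "unitary_mat d V" and lp: "length p = d"
  shows "mtrace ((V * diag_of p * mat_adjoint V) * (V * diag_of (map ln p) * mat_adjoint V)) =
     complex_of_real (\<Sum>i<d. p!i * ln (p!i))"
proof -
  have Vc: "V \<in> carrier_mat d d" using uV unfolding unitary_mat_def by auto
  have lp': "length (map ln p) = d" using lp by simp
  have "mtrace ((V * diag_of p * mat_adjoint V) * (V * diag_of (map ln p) * mat_adjoint V)) =
    complex_of_real (\<Sum>i<d. \<Sum>j<d. p!i * map ln p!j * (cmod (\<Sum>k<d. cnj (V$$(k,j)) * V$$(k,i)))^2)"
    by (rule tr_formula[OF Vc Vc lp lp'])
  also have "(\<Sum>i<d. \<Sum>j<d. p!i * map ln p!j * (cmod (\<Sum>k<d. cnj (V$$(k,j)) * V$$(k,i)))^2)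
     = (\<Sum>i<d. \<Sum>j<d. ind (j = i) * (p!i * ln (p!j)))"
  proof (rule sum.cong[OF refl], rule sum.cong[OF refl])
    fix i j assume "i \<in> {..<d}" "j \<in> {..<d}"
    hence ij: "i < d" "j < d" by auto
    show "p!i * map ln p!j * (cmod (\<Sum>k<d. cnj (V$$(k,j)) * V$$(k,i)))^2 = ind (j = i) * (p!i * ln (p!j))"
      using unitary_cols[OF uV ij(2) ij(1)] ij lp by (simp add: ind_def)
  qed
  also have "\<dots> = (\<Sum>i<d. p!i * ln (p!i))"
    by (rule sum.cong[OF refl], rule h1', simp)
  finally show ?thesis .
qed

theorem theorem3:
  fixes d :: nat and \<rho> \<sigma> :: "complex mat"
  assumes "density_mat d \<rho>" and "density_mat d \<sigma>" and "invertible_mat \<sigma>"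
  defines "S \<equiv> (\<lambda>U. ereal (qrel_entropy d (U * \<rho> * mat_adjoint U) \<sigma>))"
  defines "Hmin \<equiv> crel_entropy (eig_desc d \<rho>) (eig_desc d \<sigma>)"
  defines "Hmax \<equiv> crel_entropy (eig_desc d \<rho>) (eig_asc d \<sigma>)"
  shows "(\<exists>U. unitary_mat d U \<and> S U = Hmin) \<and> (\<forall>U. unitary_mat d U \<longrightarrow> Hmin \<le> S U)
     \<and> (\<exists>U. unitary_mat d U \<and> S U = Hmax) \<and> (\<forall>U. unitary_mat d U \<longrightarrow> S U \<le> Hmax)
     \<and> S ` {U. unitary_mat d U} = {Hmin .. Hmax}"
proof -
  have \<rho>c: "\<rho> \<in> carrier_mat d d" and h\<rho>: "hermitian_mat \<rho>" using assms(1) unfolding density_mat_def psd_mat_def by auto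
  have \<sigma>c: "\<sigma> \<in> carrier_mat d d" and h\<sigma>: "hermitian_mat \<sigma>" and p\<sigma>: "psd_mat d \<sigma>"
    using assms(2) unfolding density_mat_def psd_mat_def by auto
  obtain V a where uV: "unitary_mat d V" and la: "length a = d" and \<rho>V: "\<rho> = V * diag_of a * mat_adjoint V"
    using spectral[OF \<rho>c h\<rho>] by blast
  obtain W b where uW: "unitary_mat d W" and lb: "length b = d" and \<sigma>W: "\<sigma> = W * diag_of b * mat_adjoint W"
    and LW: "mat_fun d ln \<sigma> = W * diag_of (map ln b) * mat_adjoint W"
    using mat_fun_spec[OF \<sigma>c h\<sigma>] by blast
  have Vc: "V \<in> carrier_mat d d" and Wc: "W \<in> carrier_mat d d" using uV uW unfolding unitary_mat_def by auto
  define e where "e = eig_desc d \<rho>"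
  define q where "q = eig_desc d \<sigma>"
  have me: "mset e = mset a" and le: "length e = d" and se: "sorted_wrt (\<ge>) e"
    using eig_desc_props[OF uV la \<rho>V] unfolding e_def by auto
  have mq: "mset q = mset b" and lq: "length q = d" and sq: "sorted_wrt (\<ge>) q"
    using eig_desc_props[OF uW lb \<sigma>W] unfolding q_def by auto
  obtain pp where pp: "pp permutes {..<d}" and ppa: "permute_list pp e = a"
    using mset_eq_permutation[OF me[symmetric]] le by metis
  obtain kk where kk: "kk permutes {..<d}" and kkb: "permute_list kk q = b"
    using mset_eq_permutation[OF mq[symmetric]] lq by metis
  have ai: "a ! i = e ! pp i" if "i < d" for i using permute_list_nth[of pp e i] pp le that ppa by simp
  have bj: "b ! j = q ! kk j" if "j < d" for j using permute_list_nth[of kk q j] kk lq that kkb by simp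
  have bpos: "b ! j > 0" if "j < d" for j
    using ev_psd_nonneg[OF p\<sigma> uW lb \<sigma>W that] ev_inv_nonzero[OF assms(3) uW lb \<sigma>W that] by linarith
  have qpos: "q ! j > 0" if "j < d" for j
  proof -
    have "q ! j \<in> set b" using mq lq that by (metis mset_eq_setD nth_mem)
    then obtain j' where "j' < d" "q ! j = b ! j'" using lb by (metis in_set_conv_nth)
    thus ?thesis using bpos by simp
  qed
  define ef where "ef i = e ! i" for i
  define lnq where "lnq j = ln (q ! j)" for j
  have de: "desc_on d ef" unfolding ef_def by (rule desc_of_sorted[OF se le])
  have dq: "desc_on d lnq"
    using desc_of_sorted[OF sq lq] qpos unfolding desc_on_def lnq_def by (auto simp: ln_le_cancel_iff)
  define E where "E = (\<Sum>i<d. e!i * ln (e!i))"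
  define Tmax where "Tmax = (\<Sum>x<d. ef x * lnq x)"
  define Tmin where "Tmin = (\<Sum>x<d. ef x * lnq (d - Suc x))"
  define Tf where "Tf U = (\<Sum>i<d. ef (pp i) * (\<Sum>j<d. (cmod ((mat_adjoint W * (U * V)) $$ (j,i)))^2 * lnq (kk j)))" for U
  have key1: "S U = ereal (E - Tf U)" if uU: "unitary_mat d U" for U
  proof -
    have Uc: "U \<in> carrier_mat d d" using uU unfolding unitary_mat_def by auto
    define X where "X = U * \<rho> * mat_adjoint U"
    have uUV: "unitary_mat d (U * V)" by (rule unitary_mult[OF uU uV])
    have UVc: "U * V \<in> carrier_mat d d" using Uc Vc by simp
    have XUV: "X = (U * V) * diag_of a * mat_adjoint (U * V)"
      unfolding X_def by (rule conj_decomp[OF uU uV la \<rho>V])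
    have Xc: "X \<in> carrier_mat d d" unfolding X_def using Uc \<rho>c by (metis adj_carrier mult_carrier_mat)
    have hX: "hermitian_mat X"
    proof -
      have "hermitian_mat (mat_adjoint (mat_adjoint U) * \<rho> * mat_adjoint U)"
        by (rule herm_conj[OF h\<rho> \<rho>c], use Uc in simp)
      thus ?thesis unfolding X_def adjoint_adjoint .
    qed
    obtain V' p' where uV': "unitary_mat d V'" and lp': "length p' = d" and XV': "X = V' * diag_of p' * mat_adjoint V'"
      and LX: "mat_fun d ln X = V' * diag_of (map ln p') * mat_adjoint V'"
      using mat_fun_spec[OF Xc hX] by blast
    have V'c: "V' \<in> carrier_mat d d" using uV' unfolding unitary_mat_def by auto
    have mp': "mset p' = mset e"
    proof -
      have "mset (eig_desc d X) = mset p'" using eig_desc_props[OF uV' lp' XV'] by simp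
      moreover have "mset (eig_desc d X) = mset a" using eig_desc_props[OF uUV la XUV] by simp
      ultimately show ?thesis using me by simp
    qed
    have L1c: "mat_fun d ln X \<in> carrier_mat d d" unfolding LX using V'c lp'
      by (metis adj_carrier diag_of_carrier length_map mult_carrier_mat)
    have L2c: "mat_fun d ln \<sigma> \<in> carrier_mat d d" unfolding LW using Wc lb
      by (metis adj_carrier diag_of_carrier length_map mult_carrier_mat)
    have t1: "mtrace (X * mat_fun d ln X) = complex_of_real E"
    proof -
      have "mtrace (X * mat_fun d ln X) = complex_of_real (\<Sum>i<d. p'!i * ln (p'!i))"
        unfolding LX unfolding XV' by (rule trace_self[OF uV' lp'])
      also have "(\<Sum>i<d. p'!i * ln (p'!i)) = E" unfolding E_def
        by (rule sum_nth_perm[OF mp' lp', of "\<lambda>x. x * ln x"])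
      finally show ?thesis .
    qed
    have t2: "mtrace (X * mat_fun d ln \<sigma>) = complex_of_real (Tf U)"
    proof -
      have lb': "length (map ln b) = d" using lb by simp
      have "mtrace (X * mat_fun d ln \<sigma>) = complex_of_real
         (\<Sum>i<d. \<Sum>j<d. a!i * map ln b!j * (cmod (\<Sum>k<d. cnj (W$$(k,j)) * (U * V)$$(k,i)))^2)"
        unfolding LW unfolding XUV by (rule tr_formula[OF UVc Wc la lb'])
      also have "(\<Sum>i<d. \<Sum>j<d. a!i * map ln b!j * (cmod (\<Sum>k<d. cnj (W$$(k,j)) * (U * V)$$(k,i)))^2) = Tf U"
        unfolding Tf_def
      proof (rule sum.cong[OF refl])
        fix i assume "i \<in> {..<d}" hence i: "i < d" by simp
        have "(\<Sum>j<d. a!i * map ln b!j * (cmod (\<Sum>k<d. cnj (W$$(k,j)) * (U * V)$$(k,i)))^2)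
          = (\<Sum>j<d. ef (pp i) * ((cmod ((mat_adjoint W * (U * V)) $$ (j,i)))^2 * lnq (kk j)))"
        proof (rule sum.cong[OF refl])
          fix j assume "j \<in> {..<d}" hence j: "j < d" by simp
          have "(mat_adjoint W * (U * V)) $$ (j,i) = (\<Sum>k<d. cnj (W$$(k,j)) * (U * V)$$(k,i))"
            using Wc UVc i j by (subst mult_index, auto intro!: sum.cong)
          thus "a!i * map ln b!j * (cmod (\<Sum>k<d. cnj (W$$(k,j)) * (U * V)$$(k,i)))^2
             = ef (pp i) * ((cmod ((mat_adjoint W * (U * V)) $$ (j,i)))^2 * lnq (kk j))"
            using ai[OF i] bj[OF j] j lb unfolding ef_def lnq_def by simp
        qed
        also have "\<dots> = ef (pp i) * (\<Sum>j<d. (cmod ((mat_adjoint W * (U * V)) $$ (j,i)))^2 * lnq (kk j))"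
          by (simp only: sum_distrib_left)
        finally show "(\<Sum>j<d. a!i * map ln b!j * (cmod (\<Sum>k<d. cnj (W$$(k,j)) * (U * V)$$(k,i)))^2)
          = ef (pp i) * (\<Sum>j<d. (cmod ((mat_adjoint W * (U * V)) $$ (j,i)))^2 * lnq (kk j))" .
      qed
      finally show ?thesis .
    qed
    have "qrel_entropy d X \<sigma> = Re (mtrace (X * mat_fun d ln X - X * mat_fun d ln \<sigma>))"
      unfolding qrel_entropy_def using Xc L1c L2c by (subst mult_minus_distrib_mat, auto)
    also have "\<dots> = Re (mtrace (X * mat_fun d ln X) - mtrace (X * mat_fun d ln \<sigma>))"
      using Xc L1c L2c by (subst mtrace_minus, auto)
    also have "\<dots> = E - Tf U" unfolding t1 t2 by simp
    finally show ?thesis unfolding S_def X_def by simp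
  qed
  have key2: "Tmin \<le> Tf U \<and> Tf U \<le> Tmax" if uU: "unitary_mat d U" for U
  proof -
    have uM: "unitary_mat d (mat_adjoint W * (U * V))"
      by (rule unitary_mult[OF unitary_adjoint[OF uW] unitary_mult[OF uU uV]])
    have dD: "dstoch d (\<lambda>j i. (cmod ((mat_adjoint W * (U * V)) $$ (j,i)))^2)" by (rule dstoch_unitary[OF uM])
    from ds_perm[OF dD de dq pp kk] show ?thesis unfolding Tf_def Tmax_def Tmin_def by simp
  qed
  have key3: "\<exists>U. unitary_mat d U \<and> Tf U = (1 - t) * Tmax + t * Tmin" if t: "0 \<le> t" "t \<le> 1" for t
  proof -
    define cc where "cc = sqrt (1 - t)"
    define ss where "ss = sqrt t"
    have cs: "cc^2 + ss^2 = 1" unfolding cc_def ss_def using t by simp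
    define M where "M = Mt d pp kk cc ss"
    have uM: "unitary_mat d M" unfolding M_def by (rule Mt_unitary[OF pp kk cs])
    define U where "U = W * M * mat_adjoint V"
    have uU: "unitary_mat d U" unfolding U_def by (rule unitary_mult[OF unitary_mult[OF uW uM] unitary_adjoint[OF uV]])
    have Mc: "M \<in> carrier_mat d d" using uM unfolding unitary_mat_def by auto
    have aV: "mat_adjoint V \<in> carrier_mat d d" and aW: "mat_adjoint W \<in> carrier_mat d d" using Vc Wc by auto
    have WM: "W * M \<in> carrier_mat d d" using Wc Mc by simp
    have eqM: "mat_adjoint W * (U * V) = M"
    proof -
      have "U * V = W * M * (mat_adjoint V * V)" unfolding U_def by (rule assoc_mult_mat[OF WM aV Vc])
      also have "mat_adjoint V * V = 1\<^sub>m d" using uV unfolding unitary_mat_def by simp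
      also have "W * M * 1\<^sub>m d = W * M" by (rule right_mult_one_mat[OF WM])
      finally have "mat_adjoint W * (U * V) = mat_adjoint W * (W * M)" by simp
      also have "\<dots> = (mat_adjoint W * W) * M" by (rule assoc_mult_mat[symmetric, OF aW Wc Mc])
      also have "mat_adjoint W * W = 1\<^sub>m d" using uW unfolding unitary_mat_def by simp
      also have "1\<^sub>m d * M = M" by (rule left_mult_one_mat[OF Mc])
      finally show ?thesis .
    qed
    have "Tf U = cc^2 * Tmax + ss^2 * Tmin"
      unfolding Tf_def eqM M_def Tmax_def Tmin_def by (rule Mt_value[OF pp kk])
    also have "\<dots> = (1 - t) * Tmax + t * Tmin" unfolding cc_def ss_def using t by simp
    finally show ?thesis using uU by blast
  qed
  have key4: "Hmin = ereal (E - Tmax)" "Hmax = ereal (E - Tmin)"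
  proof -
    have lq': "length (eig_asc d \<sigma>) = d" unfolding eig_asc_def using lq q_def by simp
    have ra: "eig_asc d \<sigma> ! j = q ! (d - Suc j)" if "j < d" for j
      unfolding eig_asc_def q_def[symmetric] using that lq by (simp add: rev_nth)
    have gen: "crel_entropy e r = ereal (E - (\<Sum>x<d. ef x * ln (r ! x)))"
      if lr: "length r = d" and rpos: "\<And>j. j < d \<Longrightarrow> r ! j > 0" for r
    proof -
      have "\<forall>j < length e. r ! j = 0 \<longrightarrow> e ! j = 0" using rpos le by fastforce
      hence "crel_entropy e r = ereal (\<Sum>j<d. if e ! j = 0 then 0 else e ! j * (ln (e ! j) - ln (r ! j)))"
        unfolding crel_entropy_def using le by simp
      also have "(\<Sum>j<d. if e ! j = 0 then 0 else e ! j * (ln (e ! j) - ln (r ! j)))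
          = (\<Sum>j<d. e ! j * ln (e ! j) - ef j * ln (r ! j))"
        unfolding ef_def by (rule sum.cong, auto simp: algebra_simps)
      also have "\<dots> = E - (\<Sum>x<d. ef x * ln (r ! x))" unfolding E_def by (simp add: sum_subtractf)
      finally show ?thesis .
    qed
    show "Hmin = ereal (E - Tmax)" unfolding Hmin_def e_def[symmetric] q_def[symmetric] Tmax_def lnq_def
      by (rule gen[OF lq qpos])
    have "Hmax = ereal (E - (\<Sum>x<d. ef x * ln (eig_asc d \<sigma> ! x)))"
      unfolding Hmax_def e_def[symmetric] using lq' ra qpos by (intro gen, auto)
    also have "(\<Sum>x<d. ef x * ln (eig_asc d \<sigma> ! x)) = Tmin" unfolding Tmin_def lnq_def
      using ra by (intro sum.cong, auto)
    finally show "Hmax = ereal (E - Tmin)" .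
  qed
  have TT: "Tmin \<le> Tmax" using key2[OF unitary_one] by linarith
  have SU: "S U \<in> {Hmin .. Hmax}" if "unitary_mat d U" for U
    using key1[OF that] key2[OF that] unfolding key4 by simp
  have att: "\<exists>U. unitary_mat d U \<and> S U = ereal r" if r: "E - Tmax \<le> r" "r \<le> E - Tmin" for r
  proof -
    define t where "t = (if Tmax = Tmin then 0 else (Tmax - (E - r)) / (Tmax - Tmin))"
    have t01: "0 \<le> t" "t \<le> 1" using r TT unfolding t_def by (auto simp: field_simps)
    have tv: "(1 - t) * Tmax + t * Tmin = E - r"
    proof (cases "Tmax = Tmin")
      case True thus ?thesis using r unfolding t_def by simp
    next
      case False
      hence nz: "Tmax - Tmin \<noteq> 0" by simp
      have "(1 - t) * Tmax + t * Tmin = Tmax - t * (Tmax - Tmin)" by (simp add: algebra_simps)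
      also have "t * (Tmax - Tmin) = Tmax - (E - r)" unfolding t_def using False nz by simp
      finally show ?thesis by simp
    qed
    obtain U where "unitary_mat d U" "Tf U = (1 - t) * Tmax + t * Tmin" using key3[OF t01] by blast
    thus ?thesis using key1 tv by auto
  qed
  have img: "S ` {U. unitary_mat d U} = {Hmin .. Hmax}"
  proof
    show "S ` {U. unitary_mat d U} \<subseteq> {Hmin .. Hmax}" using SU by auto
    show "{Hmin .. Hmax} \<subseteq> S ` {U. unitary_mat d U}"
    proof
      fix y assume y: "y \<in> {Hmin .. Hmax}"
      then obtain r where yr: "y = ereal r" unfolding key4 by (cases y, auto)
      hence "E - Tmax \<le> r" "r \<le> E - Tmin" using y unfolding key4 by auto
      from att[OF this] obtain U where "unitary_mat d U" "S U = ereal r" by blast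
      thus "y \<in> S ` {U. unitary_mat d U}" using yr by (metis (mono_tags, lifting) image_eqI mem_Collect_eq)
    qed
  qed
  have hmin: "Hmin \<in> {Hmin .. Hmax}" and hmax: "Hmax \<in> {Hmin .. Hmax}" using TT unfolding key4 by auto
  show ?thesis
  proof (intro conjI)
    show "\<exists>U. unitary_mat d U \<and> S U = Hmin" using hmin unfolding img[symmetric] by auto
    show "\<exists>U. unitary_mat d U \<and> S U = Hmax" using hmax unfolding img[symmetric] by auto
    show "\<forall>U. unitary_mat d U \<longrightarrow> Hmin \<le> S U" using SU by auto
    show "\<forall>U. unitary_mat d U \<longrightarrow> S U \<le> Hmax" using SU by auto
    show "S ` {U. unitary_mat d U} = {Hmin .. Hmax}" by (rule img)
  qed
qed

end
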